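(* Let $M=M_0$ be a model set with $0\notin S$ and let $\Omega_M$ be its hull with the translation action of $\mathbb R^n$. Then $(\mathbb T,\mathbb R^n)$ together with the map $\mu:\Omega_M\to\mathbb T$ is the maximal equicontinuous factor of $(\Omega_M,\mathbb R^n)$, the minimal rank of $(\Omega_M,\mathbb R^n)$ is $1$, and two elements of $\Omega_M$ are proximal if and only if they have the same image under $\mu$.
   Context: Let $H$ be a locally compact abelian group with neutral element $e$ and $\Gamma\subset\mathbb R^n\times H$ a lattice (discrete co-compact subgroup). Let $\pi^\|,\pi^\perp$ be the projections of $\mathbb R^n\times H$ onto $\mathbb R^n$ and $H$; assume their restrictions to $\Gamma$ are injective with dense image. Let $K\subset H$ be compact, the closure of its interior, with trivial stabilizer ($h+K=K\Rightarrow h=e$). For $x\in\mathbb R^n\times H$ let $M_x=\{\pi^\|(\gamma+x):\gamma\in\Gamma,\ \pi^\perp(\gamma+x)\in K\}\subset\mathbb R^n$ (a model set). The singular set is $S=\{x:\pi^\perp(x)\in\partial K+\pi^\perp(\Gamma)\}$ and $NS$ its complement. The hull $\Omega_M$ is the closure of the translates $M-v$ in the local (Delone set) topology. $\mathbb T=(\mathbb R^n\times H)/\Gamma$ with the action $v\cdot(x+\Gamma)=(x+(v,e))+\Gamma$. It is known that the map $M_x\mapsto x+\Gamma$ ($x\in NS$) extends to a continuous surjective $\mathbb R^n$-equivariant map $\mu:\Omega_M\to\mathbb T$ which is one-to-one precisely over $NS/\Gamma$. Two Delone sets are proximal if $\inf_v d(L-v,L'-v)=0$ for a metric $d$ compatible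 with the local topology. The minimal rank is $\inf_x\#\pi_{max}^{-1}(x)$ for the maximal equicontinuous factor $\pi_{max}$. *)

theory Defs
  imports "HOL-Analysis.Analysis" "HOL-Library.Extended_Nat"
begin

text \<open>Model set M_x for a point x of R^n x H (R^n is an abstract euclidean space 'v).\<close>
definition model_set :: "('v::euclidean_space \<times> 'h::ab_group_add) set \<Rightarrow> 'h set \<Rightarrow> 'v \<times> 'h \<Rightarrow> 'v set" where
  "model_set \<Gamma> K x = {fst (\<gamma> + x) | \<gamma>. \<gamma> \<in> \<Gamma> \<and> snd (\<gamma> + x) \<in> K}"

definition singular_set :: "('v::euclidean_space \<times> 'h::{ab_group_add,topological_space}) set \<Rightarrow> 'h set \<Rightarrow> ('v \<times> 'h) set" where
  "singular_set \<Gamma> K = {x. \<exists>a\<in>frontier K. \<exists>\<gamma>\<in>\<Gamma>. snd x = a + snd \<gamma>}"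

definition coset :: "('a::ab_group_add) set \<Rightarrow> 'a \<Rightarrow> 'a set" where
  "coset \<Gamma> x = (\<lambda>\<gamma>. x + \<gamma>) ` \<Gamma>"

text \<open>Quotient topology on the torus (R^n x H)/Gamma, points being cosets.\<close>
definition torus_topology :: "('a::{ab_group_add,topological_space}) set \<Rightarrow> 'a set topology" where
  "torus_topology \<Gamma> = topology (\<lambda>U. U \<subseteq> range (coset \<Gamma>) \<and> open (coset \<Gamma> -` U))"

lemma istopology_torus:
  "istopology (\<lambda>U. U \<subseteq> range (coset \<Gamma>) \<and> open (coset \<Gamma> -` (U::'a::{ab_group_add,topological_space} set set)))"
  unfolding istopology_def
proof (rule conjI)
  show "\<forall>S T. S \<subseteq> range (coset \<Gamma>) \<and> open (coset \<Gamma> -` S) \<longrightarrow>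
     T \<subseteq> range (coset \<Gamma>) \<and> open (coset \<Gamma> -` T) \<longrightarrow>
     S \<inter> T \<subseteq> range (coset \<Gamma>) \<and> open (coset \<Gamma> -` (S \<inter> T))"
    unfolding vimage_Int by (intro allI impI conjI open_Int; elim conjE; (erule le_infI1)?)
  show "\<forall>KK. (\<forall>K\<in>KK. K \<subseteq> range (coset \<Gamma>) \<and> open (coset \<Gamma> -` K)) \<longrightarrow>
     \<Union>KK \<subseteq> range (coset \<Gamma>) \<and> open (coset \<Gamma> -` \<Union>KK)"
  proof (intro allI impI)
    fix KK :: "'a set set set"
    assume h: "\<forall>K\<in>KK. K \<subseteq> range (coset \<Gamma>) \<and> open (coset \<Gamma> -` K)"
    have e: "coset \<Gamma> -` \<Union>KK = (\<Union>K\<in>KK. coset \<Gamma> -` K)" by blast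
    have "open (\<Union>K\<in>KK. coset \<Gamma> -` K)" by (rule open_UN) (use h in simp)
    moreover have "\<Union>KK \<subseteq> range (coset \<Gamma>)" by (rule Sup_least) (use h in simp)
    ultimately show "\<Union>KK \<subseteq> range (coset \<Gamma>) \<and> open (coset \<Gamma> -` \<Union>KK)" using e by simp
  qed
qed

definition torus_act :: "'v::euclidean_space \<Rightarrow> ('v \<times> 'h::ab_group_add) set \<Rightarrow> ('v \<times> 'h) set" where
  "torus_act v c = (\<lambda>p. p + (v, 0)) ` c"

definition loc_close :: "real \<Rightarrow> real \<Rightarrow> 'v::euclidean_space set \<Rightarrow> 'v set \<Rightarrow> bool" where
  "loc_close R \<epsilon> L L' \<longleftrightarrow> (\<exists>t. norm t < \<epsilon> \<and> ((\<lambda>p. p + t) ` L) \<inter> ball 0 R = L' \<inter> ball 0 R)"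

definition loc_open :: "'v::euclidean_space set set \<Rightarrow> bool" where
  "loc_open U \<longleftrightarrow> (\<forall>L\<in>U. \<exists>R>0. \<exists>\<epsilon>>0. {L'. loc_close R \<epsilon> L L'} \<subseteq> U)"

lemma loc_close_mono:
  fixes L L' :: "'v::euclidean_space set"
  assumes "loc_close R \<epsilon> L L'" "R' \<le> R" "\<epsilon> \<le> \<epsilon>'"
  shows "loc_close R' \<epsilon>' L L'"
proof -
  from assms(1) obtain t where t: "norm t < \<epsilon>" "((\<lambda>p. p + t) ` L) \<inter> ball 0 R = L' \<inter> ball 0 R"
    unfolding loc_close_def by blast
  have "ball 0 R' \<subseteq> ball 0 R" using assms(2) by auto
  then have "((\<lambda>p. p + t) ` L) \<inter> ball 0 R' = L' \<inter> ball 0 R'" using t(2) by blast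
  moreover have "norm t < \<epsilon>'" using t(1) assms(3) by linarith
  ultimately show ?thesis unfolding loc_close_def by blast
qed

lemma istopology_loc_open: "istopology (loc_open :: 'v::euclidean_space set set \<Rightarrow> bool)"
  unfolding istopology_def
proof (rule conjI)
  show "\<forall>S T. loc_open S \<longrightarrow> loc_open T \<longrightarrow> loc_open (S \<inter> (T::'v set set))"
  proof (intro allI impI)
    fix S T :: "'v set set"
    assume S: "loc_open S" and T: "loc_open T"
    show "loc_open (S \<inter> T)"
      unfolding loc_open_def
    proof
      fix L assume L: "L \<in> S \<inter> T"
      from L S obtain R1 e1 where 1: "R1 > 0" "e1 > 0" "{L'. loc_close R1 e1 L L'} \<subseteq> S"
        unfolding loc_open_def by auto
      from L T obtain R2 e2 where 2: "R2 > 0" "e2 > 0" "{L'. loc_close R2 e2 L L'} \<subseteq> T"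
        unfolding loc_open_def by auto
      have "{L'. loc_close (max R1 R2) (min e1 e2) L L'} \<subseteq> S \<inter> T"
      proof
        fix L' assume "L' \<in> {L'. loc_close (max R1 R2) (min e1 e2) L L'}"
        then have c: "loc_close (max R1 R2) (min e1 e2) L L'" by simp
        have "loc_close R1 e1 L L'" by (rule loc_close_mono[OF c]) auto
        moreover have "loc_close R2 e2 L L'" by (rule loc_close_mono[OF c]) auto
        ultimately show "L' \<in> S \<inter> T" using 1(3) 2(3) by blast
      qed
      moreover have "max R1 R2 > 0" "min e1 e2 > 0" using 1 2 by auto
      ultimately show "\<exists>R>0. \<exists>\<epsilon>>0. {L'. loc_close R \<epsilon> L L'} \<subseteq> S \<inter> T" by blast
    qed
  qed
  show "\<forall>KK. (\<forall>K\<in>KK. loc_open K) \<longrightarrow> loc_open (\<Union>(KK::'v set set set))"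
  proof (intro allI impI)
    fix KK :: "'v set set set"
    assume h: "\<forall>K\<in>KK. loc_open K"
    show "loc_open (\<Union>KK)"
      unfolding loc_open_def
    proof
      fix L assume "L \<in> \<Union>KK"
      then obtain K where K: "K \<in> KK" "L \<in> K" by (rule UnionE)
      then have "loc_open K" using h by simp
      then obtain R e where "R > 0" "e > 0" "{L'. loc_close R e L L'} \<subseteq> K"
        using K(2) unfolding loc_open_def by auto
      moreover have "K \<subseteq> \<Union>KK" using K(1) by (rule Union_upper)
      ultimately show "\<exists>R>0. \<exists>\<epsilon>>0. {L'. loc_close R \<epsilon> L L'} \<subseteq> \<Union>KK"
        by (meson order_trans)
    qed
  qed
qed

definition local_topology :: "'v::euclidean_space set topology" where
  "local_topology = topology loc_open"

definition dhull :: "'v::euclidean_space set \<Rightarrow> 'v set set" where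
  "dhull L = local_topology closure_of range (\<lambda>v. (\<lambda>p. p - v) ` L)"

definition set_act :: "'v::euclidean_space \<Rightarrow> 'v set \<Rightarrow> 'v set" where
  "set_act v L = (\<lambda>p. p + v) ` L"

definition dyn_sys :: "'a topology \<Rightarrow> ('v::euclidean_space \<Rightarrow> 'a \<Rightarrow> 'a) \<Rightarrow> bool" where
  "dyn_sys X act \<longleftrightarrow> compact_space X \<and> Hausdorff_space X
     \<and> (\<forall>v. \<forall>x\<in>topspace X. act v x \<in> topspace X)
     \<and> continuous_map (prod_topology euclidean X) X (\<lambda>(v, x). act v x)
     \<and> (\<forall>x\<in>topspace X. act 0 x = x)
     \<and> (\<forall>u v. \<forall>x\<in>topspace X. act (u + v) x = act u (act v x))"

text \<open>Equicontinuity w.r.t. the unique uniformity of a compact Hausdorff space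
  (entourages = neighbourhoods of the diagonal).\<close>
definition equicontinuous :: "'a topology \<Rightarrow> ('v \<Rightarrow> 'a \<Rightarrow> 'a) \<Rightarrow> bool" where
  "equicontinuous X act \<longleftrightarrow>
    (\<forall>W. openin (prod_topology X X) W \<and> (\<forall>x\<in>topspace X. (x, x) \<in> W) \<longrightarrow>
      (\<exists>V. openin (prod_topology X X) V \<and> (\<forall>x\<in>topspace X. (x, x) \<in> V) \<and>
         (\<forall>v. \<forall>(x, y)\<in>V. (act v x, act v y) \<in> W)))"

definition factor_map :: "'a topology \<Rightarrow> ('v \<Rightarrow> 'a \<Rightarrow> 'a) \<Rightarrow> 'b topology \<Rightarrow> ('v \<Rightarrow> 'b \<Rightarrow> 'b) \<Rightarrow> ('a \<Rightarrow> 'b) \<Rightarrow> bool" where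
  "factor_map X actX Y actY f \<longleftrightarrow> continuous_map X Y f \<and> f ` topspace X = topspace Y
     \<and> (\<forall>v. \<forall>x\<in>topspace X. f (actX v x) = actY v (f x))"

text \<open>(Y, actY) with pi is the maximal equicontinuous factor of (X, actX); the maximality
  is required against every equicontinuous factor carried by the type 'z (a free type
  variable in the theorem, hence arbitrary).\<close>
definition max_equicont_factor ::
  "'z itself \<Rightarrow> 'a topology \<Rightarrow> ('v::euclidean_space \<Rightarrow> 'a \<Rightarrow> 'a) \<Rightarrow> 'b topology \<Rightarrow> ('v \<Rightarrow> 'b \<Rightarrow> 'b) \<Rightarrow> ('a \<Rightarrow> 'b) \<Rightarrow> bool" where
  "max_equicont_factor (_::'z itself) X actX Y actY \<pi> \<longleftrightarrow>
     dyn_sys Y actY \<and> equicontinuous Y actY \<and> factor_map X actX Y actY \<pi> \<and>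
     (\<forall>(Z::'z topology) actZ \<rho>. dyn_sys Z actZ \<and> equicontinuous Z actZ \<and> factor_map X actX Z actZ \<rho>
        \<longrightarrow> (\<exists>f. factor_map Y actY Z actZ f \<and> (\<forall>x\<in>topspace X. \<rho> x = f (\<pi> x))))"

definition ecard :: "'a set \<Rightarrow> enat" where
  "ecard A = (if finite A then enat (card A) else \<infinity>)"

definition minimal_rank :: "'a topology \<Rightarrow> 'b topology \<Rightarrow> ('a \<Rightarrow> 'b) \<Rightarrow> enat" where
  "minimal_rank X Y \<pi> = (INF y\<in>topspace Y. ecard {x\<in>topspace X. \<pi> x = y})"

text \<open>Proximality (uniform version; for compact metric spaces equivalent to
  inf_v d(v.x, v.y) = 0 for any compatible metric d).\<close>
definition proximal :: "'a topology \<Rightarrow> ('v \<Rightarrow> 'a \<Rightarrow> 'a) \<Rightarrow> 'a \<Rightarrow> 'a \<Rightarrow> bool" where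
  "proximal X act x y \<longleftrightarrow>
    (\<forall>W. openin (prod_topology X X) W \<and> (\<forall>z\<in>topspace X. (z, z) \<in> W) \<longrightarrow>
       (\<exists>v. (act v x, act v y) \<in> W))"

end

theory Submission
  imports Defs
begin


lemma openin_local: "openin local_topology = loc_open"
  unfolding local_topology_def by (rule topology_inverse'[OF istopology_loc_open])

lemma topspace_local: "topspace local_topology = UNIV"
proof -
  have "loc_open (UNIV :: 'a::euclidean_space set set)" unfolding loc_open_def
    by (auto intro!: exI[of _ 1])
  then show ?thesis by (metis openin_local openin_subset top.extremum_uniqueI)
qed

lemma openin_torus: "openin (torus_topology \<Gamma>) U \<longleftrightarrow> U \<subseteq> range (coset \<Gamma>) \<and> open (coset \<Gamma> -` U)"
  unfolding torus_topology_def by (rule fun_cong[OF topology_inverse'[OF istopology_torus]])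

lemma topspace_torus: "topspace (torus_topology \<Gamma>) = range (coset \<Gamma>)"
proof -
  have "openin (torus_topology \<Gamma>) (range (coset \<Gamma>))" unfolding openin_torus by (simp add: vimage_def)
  moreover have "topspace (torus_topology \<Gamma>) \<subseteq> range (coset \<Gamma>)"
    unfolding topspace_def openin_torus by blast
  ultimately show ?thesis using openin_subset by blast
qed



definition tgrp :: "'g::{topological_space,ab_group_add} itself \<Rightarrow> bool" where
  "tgrp _ \<longleftrightarrow> (\<forall>(U::'g set) a. open U \<longrightarrow> open ((\<lambda>y. y + a) ` U)) \<and>
     (\<forall>U::'g set. open U \<and> 0 \<in> U \<longrightarrow> (\<exists>U'. open U' \<and> 0 \<in> U' \<and> (\<forall>x\<in>U'. \<forall>y\<in>U'. x - y \<in> U \<and> x + y \<in> U)))"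

lemma tgrp_class: "tgrp TYPE('g::topological_ab_group_add)"
  unfolding tgrp_def
proof (intro conjI allI impI)
  fix U :: "'g set" and a :: 'g assume U: "open U"
  have "(\<lambda>y. y + a) ` U = (\<lambda>y. y - a) -` U"
    by (auto simp: image_iff) (metis diff_add_cancel)
  moreover have "continuous_on UNIV (\<lambda>y::'g. y - a)" by (intro continuous_intros)
  ultimately show "open ((\<lambda>y. y + a) ` U)" using U
    by (simp add: continuous_on_open_vimage[OF open_UNIV])
next
  fix U :: "'g set" assume U: "open U \<and> 0 \<in> U"
  have c: "continuous_on UNIV (\<lambda>p::'g\<times>'g. (fst p - snd p, fst p + snd p))"
    by (intro continuous_intros)
  have "open ((\<lambda>p::'g\<times>'g. (fst p - snd p, fst p + snd p)) -` (U \<times> U))"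
    using c U by (simp add: continuous_on_open_vimage[OF open_UNIV] open_Times)
  moreover have "(0,0) \<in> (\<lambda>p::'g\<times>'g. (fst p - snd p, fst p + snd p)) -` (U \<times> U)" using U by simp
  ultimately obtain A B where AB: "open A" "open B" "(0,0) \<in> A \<times> B"
    "A \<times> B \<subseteq> (\<lambda>p::'g\<times>'g. (fst p - snd p, fst p + snd p)) -` (U \<times> U)"
    by (rule open_prod_elim)
  show "\<exists>U'. open U' \<and> 0 \<in> U' \<and> (\<forall>x\<in>U'. \<forall>y\<in>U'. x - y \<in> U \<and> x + y \<in> U)"
    apply (rule exI[of _ "A \<inter> B"]) using AB by auto
qed

lemma tgrp_prod:
  assumes "tgrp TYPE('a::{topological_space,ab_group_add})" "tgrp TYPE('b::{topological_space,ab_group_add})"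
  shows "tgrp TYPE('a \<times> 'b)"
  unfolding tgrp_def
proof (intro conjI allI impI)
  fix U :: "('a\<times>'b) set" and a assume U: "open U"
  show "open ((\<lambda>y. y + a) ` U)"
  proof (rule open_prod_intro)
    fix x assume "x \<in> (\<lambda>y. y + a) ` U"
    then obtain y where y: "y \<in> U" "x = y + a" by auto
    obtain A B where AB: "open A" "open B" "y \<in> A \<times> B" "A \<times> B \<subseteq> U" using open_prod_elim[OF U y(1)] by blast
    have "open ((\<lambda>u. u + fst a) ` A)" "open ((\<lambda>u. u + snd a) ` B)"
      using assms AB unfolding tgrp_def by auto
    moreover have "x \<in> (\<lambda>u. u + fst a) ` A \<times> (\<lambda>u. u + snd a) ` B"
      using y AB by (cases y, cases a) auto
    moreover have "(\<lambda>u. u + fst a) ` A \<times> (\<lambda>u. u + snd a) ` B \<subseteq> (\<lambda>y. y + a) ` U"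
    proof
      fix p assume "p \<in> (\<lambda>u. u + fst a) ` A \<times> (\<lambda>u. u + snd a) ` B"
      then obtain u w where "u \<in> A" "w \<in> B" "p = (u + fst a, w + snd a)" by auto
      then show "p \<in> (\<lambda>y. y + a) ` U" using AB(4)
        by (intro image_eqI[of _ _ "(u,w)"]) (auto simp: prod_eq_iff)
    qed
    ultimately show "\<exists>A B. open A \<and> open B \<and> x \<in> A \<times> B \<and> A \<times> B \<subseteq> (\<lambda>y. y + a) ` U" by blast
  qed
next
  fix U :: "('a\<times>'b) set" assume U: "open U \<and> 0 \<in> U"
  obtain A B where AB: "open A" "open B" "0 \<in> A \<times> B" "A \<times> B \<subseteq> U"
    using open_prod_elim[of U 0] U by blast
  obtain A' where A': "open A'" "0 \<in> A'" "\<forall>x\<in>A'. \<forall>y\<in>A'. x - y \<in> A \<and> x + y \<in> A"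
    using assms(1) AB unfolding tgrp_def by (auto simp: zero_prod_def)
  obtain B' where B': "open B'" "0 \<in> B'" "\<forall>x\<in>B'. \<forall>y\<in>B'. x - y \<in> B \<and> x + y \<in> B"
    using assms(2) AB unfolding tgrp_def by (auto simp: zero_prod_def)
  show "\<exists>U'. open U' \<and> 0 \<in> U' \<and> (\<forall>x\<in>U'. \<forall>y\<in>U'. x - y \<in> U \<and> x + y \<in> U)"
    apply (rule exI[of _ "A' \<times> B'"])
    using A' B' AB(4) by (auto simp: open_Times zero_prod_def)
qed



lemma tgrp_G: "tgrp TYPE('v::euclidean_space \<times> 'h::topological_ab_group_add)"
  by (rule tgrp_prod[OF tgrp_class tgrp_class])

lemma tgrp_open_trans: "tgrp TYPE('g::{topological_space,ab_group_add}) \<Longrightarrow> open (U::'g set) \<Longrightarrow> open ((\<lambda>y. y + a) ` U)"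
  unfolding tgrp_def by blast

lemma tgrp_small: "tgrp TYPE('g::{topological_space,ab_group_add}) \<Longrightarrow> open (U::'g set) \<Longrightarrow> 0 \<in> U \<Longrightarrow>
   \<exists>U'. open U' \<and> 0 \<in> U' \<and> (\<forall>x\<in>U'. \<forall>y\<in>U'. x - y \<in> U \<and> x + y \<in> U)"
  unfolding tgrp_def by blast

lemma tgrp_open_trans': "tgrp TYPE('g::{topological_space,ab_group_add}) \<Longrightarrow> open (U::'g set) \<Longrightarrow> open {y. y + a \<in> U}"
proof -
  assume t: "tgrp TYPE('g)" and U: "open U"
  have "{y. y + a \<in> U} = (\<lambda>y. y + (-a)) ` U"
  proof (rule set_eqI, rule iffI)
    fix y assume "y \<in> {y. y+a\<in>U}" then show "y \<in> (\<lambda>y. y + -a) ` U" by (intro image_eqI[of _ _ "y+a"]) auto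
  next
    fix y assume "y \<in> (\<lambda>y. y + - a) ` U" then show "y \<in> {y. y + a \<in> U}" by auto
  qed
  then show ?thesis using tgrp_open_trans[OF t U, of "-a"] by (simp only:)
qed

lemma closure_meet: "z \<in> closure S \<Longrightarrow> open N \<Longrightarrow> z \<in> N \<Longrightarrow> \<exists>y\<in>S. y \<in> N"
proof (rule ccontr)
  assume a: "z \<in> closure S" "open N" "z \<in> N" "\<not> (\<exists>y\<in>S. y \<in> N)"
  then have "N \<inter> S = {}" by auto
  then have "N \<inter> closure S = {}" using open_Int_closure_eq_empty[OF a(2)] by simp
  then show False using a by auto
qed

locale lat =
  fixes \<Gamma> :: "('v::euclidean_space \<times> 'h::{topological_ab_group_add,t2_space}) set"
  assumes G0: "0 \<in> \<Gamma>" and Gadd: "\<And>a b. a \<in> \<Gamma> \<Longrightarrow> b \<in> \<Gamma> \<Longrightarrow> a + b \<in> \<Gamma>"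
    and Gneg: "\<And>a. a \<in> \<Gamma> \<Longrightarrow> - a \<in> \<Gamma>"
    and Gdisc: "\<And>\<gamma>. \<gamma> \<in> \<Gamma> \<Longrightarrow> \<exists>U. open U \<and> U \<inter> \<Gamma> = {\<gamma>}"
begin

lemma tgrpG: "tgrp TYPE('v \<times> 'h)" by (rule tgrp_G)

lemma Gdiff: "a \<in> \<Gamma> \<Longrightarrow> b \<in> \<Gamma> \<Longrightarrow> a - b \<in> \<Gamma>"
  using Gadd Gneg by (metis diff_conv_add_uminus)

lemma coset_eq: "coset \<Gamma> x = coset \<Gamma> y \<longleftrightarrow> x - y \<in> \<Gamma>"
proof
  assume "coset \<Gamma> x = coset \<Gamma> y"
  then have "x \<in> coset \<Gamma> y" using G0 unfolding coset_def by (metis add.right_neutral image_eqI)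
  then obtain g where "g \<in> \<Gamma>" "x = y + g" unfolding coset_def by auto
  then show "x - y \<in> \<Gamma>" by simp
next
  assume d: "x - y \<in> \<Gamma>"
  show "coset \<Gamma> x = coset \<Gamma> y" unfolding coset_def
  proof (auto simp: image_iff)
    fix g assume g: "g \<in> \<Gamma>"
    have "(x - y) + g \<in> \<Gamma>" using d g Gadd by blast
    then show "\<exists>g'\<in>\<Gamma>. x + g = y + g'" 
      by (intro bexI[of _ "(x - y) + g"]) (auto simp: algebra_simps)
  next
    fix g assume g: "g \<in> \<Gamma>"
    have "g - (x - y) \<in> \<Gamma>" using d g Gdiff by blast
    then show "\<exists>g'\<in>\<Gamma>. y + g = x + g'"
      by (intro bexI[of _ "g - (x - y)"]) (auto simp: algebra_simps)
  qed
qed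

lemma torus_act_coset: "torus_act v (coset \<Gamma> x) = coset \<Gamma> (x + (v,0))"
  unfolding torus_act_def coset_def image_image
  by (rule image_cong) (auto simp: algebra_simps)

lemma vimage_coset_image: "coset \<Gamma> -` (coset \<Gamma> ` A) = (\<Union>g\<in>\<Gamma>. (\<lambda>y. y + g) ` A)"
proof (rule set_eqI, rule iffI)
  fix y assume "y \<in> coset \<Gamma> -` (coset \<Gamma> ` A)"
  then obtain a where a: "a \<in> A" "coset \<Gamma> y = coset \<Gamma> a" by blast
  then have "y - a \<in> \<Gamma>" using coset_eq by blast
  moreover have "y = a + (y - a)" by simp
  ultimately show "y \<in> (\<Union>g\<in>\<Gamma>. (\<lambda>y. y + g) ` A)" using a(1) by blast
next
  fix y assume "y \<in> (\<Union>g\<in>\<Gamma>. (\<lambda>y. y + g) ` A)"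
  then obtain g a where ga: "g \<in> \<Gamma>" "a \<in> A" "y = a + g" by blast
  then have "coset \<Gamma> y = coset \<Gamma> a" using coset_eq by simp
  then show "y \<in> coset \<Gamma> -` (coset \<Gamma> ` A)" using ga by blast
qed

lemma openin_coset_image: "open A \<Longrightarrow> openin (torus_topology \<Gamma>) (coset \<Gamma> ` A)"
  unfolding openin_torus vimage_coset_image
  by (auto intro!: open_UN tgrp_open_trans[OF tgrpG])

lemma Gclosed: "closed \<Gamma>"
proof -
  obtain U where U: "open U" "U \<inter> \<Gamma> = {0}" using Gdisc G0 by blast
  have "0 \<in> U" using U(2) by blast
  have "\<exists>V. open V \<and> 0 \<in> V \<and> (\<forall>x\<in>V. \<forall>y\<in>V. x - y \<in> U \<and> x + y \<in> U)"
    by (rule tgrp_small[OF tgrpG U(1) \<open>0\<in>U\<close>])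
  then obtain V where V0: "open V \<and> 0 \<in> V \<and> (\<forall>x\<in>V. \<forall>y\<in>V. x - y \<in> U \<and> x + y \<in> U)"
    ..
  note V = conjunct1[OF V0] conjunct1[OF conjunct2[OF V0]] conjunct2[OF conjunct2[OF V0]]
  have "z \<in> \<Gamma>" if z: "z \<in> closure \<Gamma>" for z
  proof (rule ccontr)
    assume nz: "z \<notin> \<Gamma>"
    define N where "N = {y. y - z \<in> V}"
    have "open N" unfolding N_def diff_conv_add_uminus by (rule tgrp_open_trans'[OF tgrpG V(1)])
    moreover have "z \<in> N" using V unfolding N_def by simp
    ultimately obtain g where g: "g \<in> \<Gamma>" "g \<in> N" using closure_meet[OF z] by blast
    have "open (N - {g})" using \<open>open N\<close> by (simp add: open_Diff)
    moreover have "z \<in> N - {g}" using \<open>z\<in>N\<close> g nz by auto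
    ultimately obtain g' where g': "g' \<in> \<Gamma>" "g' \<in> N - {g}" using closure_meet[OF z] by blast
    have "g' - z \<in> V" "g - z \<in> V" using g(2) g'(2) unfolding N_def by auto
    then have "(g' - z) - (g - z) \<in> U" using V(3) by blast
    moreover have "(g' - z) - (g - z) = g' - g" by (simp add: algebra_simps)
    ultimately have "g' - g \<in> U" by simp
    moreover have "g' - g \<in> \<Gamma>" using Gdiff g(1) g'(1) by blast
    ultimately have "g' - g = 0" using U(2) by blast
    then show False using g' by simp
  qed
  then show ?thesis using closure_subset_eq by blast
qed

end


context lat begin

lemma coset_mem_range: "coset \<Gamma> z \<in> topspace (torus_topology \<Gamma>)"
  by (simp add: topspace_torus)

lemma open_shift: "open P \<Longrightarrow> open {u. u + a \<in> (P::('v\<times>'h) set)}"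
  by (rule tgrp_open_trans'[OF tgrpG])

lemma open_shift': "open P \<Longrightarrow> open {u. u - a \<in> (P::('v\<times>'h) set)}"
  unfolding diff_conv_add_uminus by (rule tgrp_open_trans'[OF tgrpG])

lemma small: "open (P::('v\<times>'h) set) \<Longrightarrow> 0 \<in> P \<Longrightarrow>
   \<exists>V. open V \<and> 0 \<in> V \<and> (\<forall>x\<in>V. \<forall>y\<in>V. x - y \<in> P \<and> x + y \<in> P)"
  by (rule tgrp_small[OF tgrpG])

lemma torus_Hausdorff: "Hausdorff_space (torus_topology \<Gamma>)"
  unfolding Hausdorff_space_def topspace_torus
proof (intro allI impI, elim conjE)
  fix c1 c2 assume "c1 \<in> range (coset \<Gamma>)" "c2 \<in> range (coset \<Gamma>)" "c1 \<noteq> c2"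
  then obtain x y where xy0: "c1 = coset \<Gamma> x" "c2 = coset \<Gamma> y" by blast
  then have "x - y \<notin> \<Gamma>" using coset_eq \<open>c1 \<noteq> c2\<close> by blast
  note xy = xy0 this
  define W where "W = {u. u + (x - y) \<in> - \<Gamma>}"
  have "open W" unfolding W_def using Gclosed by (intro open_shift) auto
  moreover have "0 \<in> W" unfolding W_def using xy by simp
  ultimately have "\<exists>V. open V \<and> 0 \<in> V \<and> (\<forall>a\<in>V. \<forall>b\<in>V. a - b \<in> W \<and> a + b \<in> W)" by (rule small)
  then obtain V where V0: "open V \<and> 0 \<in> V \<and> (\<forall>a\<in>V. \<forall>b\<in>V. a - b \<in> W \<and> a + b \<in> W)" ..
  define A where "A = coset \<Gamma> ` {a. a - x \<in> V}"
  define B where "B = coset \<Gamma> ` {b. b - y \<in> V}"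
  have "openin (torus_topology \<Gamma>) A" unfolding A_def using V0 by (intro openin_coset_image open_shift') blast
  moreover have "openin (torus_topology \<Gamma>) B" unfolding B_def using V0 by (intro openin_coset_image open_shift') blast
  moreover have "c1 \<in> A" unfolding A_def xy using V0 by auto
  moreover have "c2 \<in> B" unfolding B_def xy using V0 by auto
  moreover have "disjnt A B"
  proof (rule ccontr)
    assume "\<not> disjnt A B"
    then obtain a b where ab: "a - x \<in> V" "b - y \<in> V" "coset \<Gamma> a = coset \<Gamma> b"
      unfolding A_def B_def disjnt_def by auto
    then have "(a - x) - (b - y) \<in> W" using V0 by blast
    then have "a - b \<notin> \<Gamma>" unfolding W_def by (simp add: algebra_simps)
    then show False using ab(3) coset_eq by simp
  qed
  ultimately show "\<exists>U V. openin (torus_topology \<Gamma>) U \<and> openin (torus_topology \<Gamma>) V \<and> c1 \<in> U \<and> c2 \<in> V \<and> disjnt U V"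
    by blast
qed


lemma open_shift_v: "open P \<Longrightarrow> open {u. u - a \<in> (P::'v set)}"
  unfolding diff_conv_add_uminus by (rule tgrp_open_trans'[OF tgrp_class])

lemma torus_act_cont:
  "continuous_map (prod_topology euclidean (torus_topology \<Gamma>)) (torus_topology \<Gamma>) (\<lambda>(v, x). torus_act v x)"
  unfolding continuous_map_def
proof (intro conjI allI impI)
  show "(\<lambda>(v, x). torus_act v x) \<in> topspace (prod_topology euclidean (torus_topology \<Gamma>)) \<rightarrow> topspace (torus_topology \<Gamma>)"
    by (auto simp: topspace_torus torus_act_coset)
next
  fix U assume U: "openin (torus_topology \<Gamma>) U"
  show "openin (prod_topology euclidean (torus_topology \<Gamma>))
          {x \<in> topspace (prod_topology euclidean (torus_topology \<Gamma>)). (case x of (v, x) \<Rightarrow> torus_act v x) \<in> U}"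
    unfolding openin_prod_topology_alt
  proof (intro allI impI)
    fix v0 c0 assume "(v0, c0) \<in> {x \<in> topspace (prod_topology euclidean (torus_topology \<Gamma>)). (case x of (v, x) \<Rightarrow> torus_act v x) \<in> U}"
    then have c0: "c0 \<in> range (coset \<Gamma>)" "torus_act v0 c0 \<in> U" by (auto simp: topspace_torus)
    then obtain z0 where z0: "c0 = coset \<Gamma> z0" by blast
    define P where "P = coset \<Gamma> -` U"
    have P: "open P" "z0 + (v0,0) \<in> P" using U c0 z0 unfolding P_def openin_torus by (auto simp: torus_act_coset)
    define W where "W = {u. u + (z0 + (v0,0)) \<in> P}"
    have "open W" "0 \<in> W" using P unfolding W_def by (auto intro: open_shift)
    then have "\<exists>V. open V \<and> 0 \<in> V \<and> (\<forall>a\<in>V. \<forall>b\<in>V. a - b \<in> W \<and> a + b \<in> W)" by (rule small)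
    then obtain V where V0: "open V \<and> 0 \<in> V \<and> (\<forall>a\<in>V. \<forall>b\<in>V. a - b \<in> W \<and> a + b \<in> W)" ..
    have "open V" "0 \<in> V" using V0 by auto
    then obtain A B where AB: "open A" "open B" "(0::'v,0::'h) \<in> A \<times> B" "A \<times> B \<subseteq> V"
      by (metis open_prod_elim zero_prod_def)
    define A' where "A' = {v. v - v0 \<in> A}"
    define B' where "B' = coset \<Gamma> ` {z. z - z0 \<in> V}"
    have "openin euclidean A'" unfolding A'_def using AB by (simp add: open_shift_v)
    moreover have "openin (torus_topology \<Gamma>) B'" unfolding B'_def
      using \<open>open V\<close> by (intro openin_coset_image open_shift')
    moreover have "v0 \<in> A'" using AB unfolding A'_def by auto
    moreover have "c0 \<in> B'" using \<open>0 \<in> V\<close> z0 unfolding B'_def by auto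
    moreover have "A' \<times> B' \<subseteq> {x \<in> topspace (prod_topology euclidean (torus_topology \<Gamma>)). (case x of (v, x) \<Rightarrow> torus_act v x) \<in> U}"
    proof (rule subsetI)
      fix p assume "p \<in> A' \<times> B'"
      then obtain v z where vz: "v \<in> A'" "z - z0 \<in> V" "p = (v, coset \<Gamma> z)" unfolding B'_def by blast
      have "(v - v0, 0) \<in> V" using vz(1) AB unfolding A'_def by auto
      then have "(z - z0) + (v - v0, 0) \<in> W" using V0 vz(2) by blast
      moreover have "(z - z0) + (v - v0, 0) + (z0 + (v0,0)) = z + (v, 0)" by (simp add: algebra_simps)
      ultimately have "z + (v,0) \<in> P" unfolding W_def by simp
      then show "p \<in> {x \<in> topspace (prod_topology euclidean (torus_topology \<Gamma>)). (case x of (v, x) \<Rightarrow> torus_act v x) \<in> U}"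
        unfolding P_def vz(3) by (simp add: torus_act_coset topspace_torus)
    qed
    ultimately show "\<exists>A B. openin euclidean A \<and> openin (torus_topology \<Gamma>) B \<and> v0 \<in> A \<and> c0 \<in> B \<and>
       A \<times> B \<subseteq> {x \<in> topspace (prod_topology euclidean (torus_topology \<Gamma>)). (case x of (v, x) \<Rightarrow> torus_act v x) \<in> U}"
      by blast
  qed
qed

lemma torus_dyn: "compact_space (torus_topology \<Gamma>) \<Longrightarrow> dyn_sys (torus_topology \<Gamma>) torus_act"
  unfolding dyn_sys_def
  by (auto simp: torus_Hausdorff torus_act_cont topspace_torus torus_act_coset algebra_simps)


definition VD :: "('v \<times> 'h) set \<Rightarrow> (('v \<times> 'h) set \<times> ('v \<times> 'h) set) set" where
  "VD D = {(coset \<Gamma> a, coset \<Gamma> b) | a b. a - b \<in> D}"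

lemma VD_open: "open D \<Longrightarrow> openin (prod_topology (torus_topology \<Gamma>) (torus_topology \<Gamma>)) (VD D)"
  unfolding openin_prod_topology_alt
proof (intro allI impI)
  fix c1 c2 assume D: "open D" and "(c1, c2) \<in> VD D"
  then obtain a b where ab: "c1 = coset \<Gamma> a" "c2 = coset \<Gamma> b" "a - b \<in> D" unfolding VD_def by blast
  define E where "E = {u. u + (a - b) \<in> D}"
  have "open E" "0 \<in> E" using D ab unfolding E_def by (auto intro: open_shift)
  then have "\<exists>V. open V \<and> 0 \<in> V \<and> (\<forall>x\<in>V. \<forall>y\<in>V. x - y \<in> E \<and> x + y \<in> E)" by (rule small)
  then obtain V where V0: "open V \<and> 0 \<in> V \<and> (\<forall>x\<in>V. \<forall>y\<in>V. x - y \<in> E \<and> x + y \<in> E)" ..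
  define A where "A = coset \<Gamma> ` {x. x - a \<in> V}"
  define B where "B = coset \<Gamma> ` {y. y - b \<in> V}"
  have "openin (torus_topology \<Gamma>) A" unfolding A_def using V0 by (intro openin_coset_image open_shift') blast
  moreover have "openin (torus_topology \<Gamma>) B" unfolding B_def using V0 by (intro openin_coset_image open_shift') blast
  moreover have "c1 \<in> A" unfolding A_def ab using V0 by auto
  moreover have "c2 \<in> B" unfolding B_def ab using V0 by auto
  moreover have "A \<times> B \<subseteq> VD D"
  proof (rule subsetI)
    fix p assume "p \<in> A \<times> B"
    then obtain x y where xy: "x - a \<in> V" "y - b \<in> V" "p = (coset \<Gamma> x, coset \<Gamma> y)"
      unfolding A_def B_def by blast
    then have "(x - a) - (y - b) \<in> E" using V0 by blast
    then have "x - y \<in> D" unfolding E_def by (simp add: algebra_simps)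
    then show "p \<in> VD D" unfolding VD_def xy(3) by blast
  qed
  ultimately show "\<exists>U V. openin (torus_topology \<Gamma>) U \<and> openin (torus_topology \<Gamma>) V \<and> c1 \<in> U \<and> c2 \<in> V \<and> U \<times> V \<subseteq> VD D"
    by blast
qed

lemma torus_equicont:
  assumes cpt: "compact_space (torus_topology \<Gamma>)"
  shows "equicontinuous (torus_topology \<Gamma>) torus_act"
  unfolding equicontinuous_def
proof (intro allI impI, elim conjE)
  fix W assume W: "openin (prod_topology (torus_topology \<Gamma>) (torus_topology \<Gamma>)) W"
    and diag: "\<forall>x\<in>topspace (torus_topology \<Gamma>). (x, x) \<in> W"
  have ex: "\<forall>z. \<exists>QN. open (fst QN) \<and> 0 \<in> fst QN \<and> snd QN \<times> snd QN \<subseteq> W \<and>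
                (\<forall>x\<in>fst QN. \<forall>y\<in>fst QN. coset \<Gamma> (z + x + y) \<in> snd QN)"
  proof
    fix z
    have "(coset \<Gamma> z, coset \<Gamma> z) \<in> W" using diag coset_mem_range by blast
    then obtain A B where AB: "openin (torus_topology \<Gamma>) A" "openin (torus_topology \<Gamma>) B"
      "coset \<Gamma> z \<in> A" "coset \<Gamma> z \<in> B" "A \<times> B \<subseteq> W"
      using W unfolding openin_prod_topology_alt by meson
    define N where "N = A \<inter> B"
    have "openin (torus_topology \<Gamma>) N" unfolding N_def using AB by blast
    then have Po: "open (coset \<Gamma> -` N)" unfolding openin_torus by blast
    define P where "P = {u. u + z \<in> coset \<Gamma> -` N}"
    have "open P" unfolding P_def using Po by (rule open_shift)
    moreover have "0 \<in> P" unfolding P_def N_def using AB by simp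
    ultimately have "\<exists>V. open V \<and> 0 \<in> V \<and> (\<forall>x\<in>V. \<forall>y\<in>V. x - y \<in> P \<and> x + y \<in> P)" by (rule small)
    then obtain V where V0: "open V \<and> 0 \<in> V \<and> (\<forall>x\<in>V. \<forall>y\<in>V. x - y \<in> P \<and> x + y \<in> P)" ..
    have "\<forall>x\<in>V. \<forall>y\<in>V. coset \<Gamma> (z + x + y) \<in> N"
    proof (intro ballI)
      fix x y assume "x \<in> V" "y \<in> V"
      then have "x + y \<in> P" using V0 by blast
      then show "coset \<Gamma> (z + x + y) \<in> N" unfolding P_def by (simp add: algebra_simps)
    qed
    moreover have "N \<times> N \<subseteq> W" using AB unfolding N_def by blast
    ultimately show "\<exists>QN. open (fst QN) \<and> 0 \<in> fst QN \<and> snd QN \<times> snd QN \<subseteq> W \<and>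
                (\<forall>x\<in>fst QN. \<forall>y\<in>fst QN. coset \<Gamma> (z + x + y) \<in> snd QN)"
      using V0 by (intro exI[of _ "(V, N)"]) auto
  qed
  obtain f where f: "\<forall>z. open (fst (f z)) \<and> 0 \<in> fst (f z) \<and> snd (f z) \<times> snd (f z) \<subseteq> W \<and>
                (\<forall>x\<in>fst (f z). \<forall>y\<in>fst (f z). coset \<Gamma> (z + x + y) \<in> snd (f z))"
    using choice[OF ex] by blast
  define Q where "Q z = fst (f z)" for z
  define N where "N z = snd (f z)" for z
  have Q: "open (Q z)" "0 \<in> Q z" "N z \<times> N z \<subseteq> W" "\<And>x y. x \<in> Q z \<Longrightarrow> y \<in> Q z \<Longrightarrow> coset \<Gamma> (z + x + y) \<in> N z" for z
    using f unfolding Q_def N_def by blast+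
  define C where "C z = coset \<Gamma> ` {u. u - z \<in> Q z}" for z
  have "\<forall>U\<in>range C. openin (torus_topology \<Gamma>) U"
    unfolding C_def using Q(1) by (auto intro!: openin_coset_image open_shift')
  moreover have "topspace (torus_topology \<Gamma>) \<subseteq> \<Union>(range C)"
  proof
    fix c assume "c \<in> topspace (torus_topology \<Gamma>)"
    then obtain z where "c = coset \<Gamma> z" unfolding topspace_torus by blast
    then have "c \<in> C z" unfolding C_def using Q(2)[of z] by auto
    then show "c \<in> \<Union>(range C)" by blast
  qed
  ultimately obtain F where F: "finite F" "F \<subseteq> range C" "topspace (torus_topology \<Gamma>) \<subseteq> \<Union>F"
    using cpt unfolding compact_space_alt by meson
  obtain Z where Z: "finite Z" "F = C ` Z" using finite_subset_image[OF F(1) F(2)] by blast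
  define D where "D = (\<Inter>z\<in>Z. Q z)"
  have Do: "open D" unfolding D_def using Z(1) Q(1) by blast
  have D0: "0 \<in> D" unfolding D_def using Q(2) by blast
  have key: "(coset \<Gamma> a, coset \<Gamma> b) \<in> W" if ab: "a - b \<in> D" for a b
  proof -
    have "coset \<Gamma> b \<in> \<Union>F" using F(3) coset_mem_range by blast
    then obtain z u where zu: "z \<in> Z" "u - z \<in> Q z" "coset \<Gamma> b = coset \<Gamma> u" unfolding Z(2) C_def by blast
    have "coset \<Gamma> (z + (u - z) + 0) \<in> N z" using Q(4)[OF zu(2) Q(2)] .
    then have 1: "coset \<Gamma> b \<in> N z" using zu(3) by simp
    have "a - b \<in> Q z" using ab zu(1) unfolding D_def by blast
    then have "coset \<Gamma> (z + (u - z) + (a - b)) \<in> N z" using Q(4)[OF zu(2)] by blast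
    moreover have "coset \<Gamma> (z + (u - z) + (a - b)) = coset \<Gamma> a"
    proof -
      have "b - u \<in> \<Gamma>" using zu(3) coset_eq by blast
      moreover have "a - (z + (u - z) + (a - b)) = b - u" by (simp add: algebra_simps)
      ultimately show ?thesis using coset_eq by metis
    qed
    ultimately have 2: "coset \<Gamma> a \<in> N z" by simp
    show ?thesis using 1 2 Q(3)[of z] by blast
  qed
  show "\<exists>V. openin (prod_topology (torus_topology \<Gamma>) (torus_topology \<Gamma>)) V \<and>
          (\<forall>x\<in>topspace (torus_topology \<Gamma>). (x, x) \<in> V) \<and> (\<forall>v. \<forall>(x, y)\<in>V. (torus_act v x, torus_act v y) \<in> W)"
  proof (intro exI[of _ "VD D"] conjI allI ballI)
    show "openin (prod_topology (torus_topology \<Gamma>) (torus_topology \<Gamma>)) (VD D)" using Do by (rule VD_open)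
  next
    fix x assume "x \<in> topspace (torus_topology \<Gamma>)"
    then obtain a where "x = coset \<Gamma> a" unfolding topspace_torus by blast
    moreover have "a - a \<in> D" using D0 by simp
    ultimately show "(x, x) \<in> VD D" unfolding VD_def by blast
  next
    fix v p assume "p \<in> VD D"
    then obtain a b where ab: "p = (coset \<Gamma> a, coset \<Gamma> b)" "a - b \<in> D" unfolding VD_def by blast
    have "(a + (v,0)) - (b + (v,0)) \<in> D" using ab(2) by simp
    then have "(coset \<Gamma> (a + (v,0)), coset \<Gamma> (b + (v,0))) \<in> W" by (rule key)
    then show "case p of (x, y) \<Rightarrow> (torus_act v x, torus_act v y) \<in> W"
      unfolding ab(1) by (simp add: torus_act_coset)
  qed
qed

end


lemma mem_img_plus: "x \<in> (\<lambda>p. p + t) ` A \<longleftrightarrow> x - t \<in> (A::'a::ab_group_add set)"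
proof
  assume "x \<in> (\<lambda>p. p + t) ` A" then show "x - t \<in> A" by auto
next
  assume "x - t \<in> A" then show "x \<in> (\<lambda>p. p + t) ` A" by (intro image_eqI[of _ _ "x - t"]) auto
qed

lemma loc_close_iff: "loc_close R \<epsilon> L L' \<longleftrightarrow> (\<exists>t. norm t < \<epsilon> \<and> (\<forall>x. norm x < R \<longrightarrow> (x - t \<in> L \<longleftrightarrow> x \<in> L')))"
  unfolding loc_close_def
proof (intro iff_exI conj_cong refl)
  fix t
  show "((\<lambda>p. p + t) ` L \<inter> ball 0 R = L' \<inter> ball 0 R) = (\<forall>x. norm x < R \<longrightarrow> (x - t \<in> L) = (x \<in> L'))"
    by (auto simp: mem_img_plus set_eq_iff)
qed

lemma set_act_mem: "x \<in> set_act v L \<longleftrightarrow> x - v \<in> L"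
  unfolding set_act_def by (rule mem_img_plus)

lemma loc_close_act:
  fixes v :: "'a::euclidean_space"
  assumes "loc_close (R + norm v) \<epsilon> L L'"
  shows "loc_close R \<epsilon> (set_act v L) (set_act v L')"
proof -
  obtain t where t: "norm t < \<epsilon>" "\<forall>x. norm x < R + norm v \<longrightarrow> (x - t \<in> L \<longleftrightarrow> x \<in> L')"
    using assms unfolding loc_close_iff by blast
  have "\<forall>x. norm x < R \<longrightarrow> (x - t \<in> set_act v L \<longleftrightarrow> x \<in> set_act v L')"
  proof (intro allI impI)
    fix x :: 'a assume x: "norm x < R"
    have "norm (x - v) \<le> norm x + norm v" by (rule norm_triangle_ineq4)
    then have "norm (x - v) < R + norm v" using x by simp
    then have "x - v - t \<in> L \<longleftrightarrow> x - v \<in> L'" using t(2) by blast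
    then show "x - t \<in> set_act v L \<longleftrightarrow> x \<in> set_act v L'"
      unfolding set_act_mem by (simp add: algebra_simps)
  qed
  then show ?thesis unfolding loc_close_iff using t(1) by blast
qed

lemma set_act_cont: "continuous_map (local_topology :: 'a::euclidean_space set topology) local_topology (set_act v)"
  unfolding continuous_map_def topspace_local openin_local
proof (intro conjI allI impI)
  fix U :: "'a set set" assume U: "loc_open U"
  show "loc_open {x \<in> UNIV. set_act v x \<in> U}"
    unfolding loc_open_def
  proof (intro ballI)
    fix L assume "L \<in> {x \<in> UNIV. set_act v x \<in> U}"
    then obtain R e where Re: "R > 0" "e > 0" "{L'. loc_close R e (set_act v L) L'} \<subseteq> U"
      using U unfolding loc_open_def by auto
    have "{L'. loc_close (R + norm v) e L L'} \<subseteq> {x \<in> UNIV. set_act v x \<in> U}"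
      using Re(3) loc_close_act by blast
    moreover have "R + norm v > 0" using Re(1) by (simp add: add_pos_nonneg)
    ultimately show "\<exists>R>0. \<exists>\<epsilon>>0. {L'. loc_close R \<epsilon> L L'} \<subseteq> {x \<in> UNIV. set_act v x \<in> U}"
      using Re(2) by blast
  qed
qed auto

lemma set_act_trans: "set_act v ((\<lambda>p. p - u) ` N) = (\<lambda>p. p - (u - v)) ` N"
  unfolding set_act_def image_image by (simp add: algebra_simps)

lemma dhull_act: "L \<in> dhull N \<Longrightarrow> set_act v L \<in> dhull N"
proof -
  assume L: "L \<in> dhull N"
  have "set_act v ` (local_topology closure_of range (\<lambda>u. (\<lambda>p. p - u) ` N))
     \<subseteq> local_topology closure_of (set_act v ` range (\<lambda>u. (\<lambda>p. p - u) ` N))"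
    by (rule continuous_map_image_closure_subset[OF set_act_cont])
  moreover have "set_act v ` range (\<lambda>u. (\<lambda>p. p - u) ` N) \<subseteq> range (\<lambda>u. (\<lambda>p. p - u) ` N)"
    using set_act_trans by blast
  ultimately show ?thesis using L unfolding dhull_def
    by (meson closure_of_mono image_subset_iff subsetD)
qed

lemma dhull_self: "N \<in> dhull N"
proof -
  have "N \<in> range (\<lambda>u. (\<lambda>p. p - u) ` N)" by (intro range_eqI[of _ _ 0]) simp
  moreover have "range (\<lambda>u. (\<lambda>p. p - u) ` N) \<subseteq> topspace local_topology" by (simp add: topspace_local)
  ultimately show ?thesis unfolding dhull_def using closure_of_subset by blast
qed

lemma open_cyl:
  fixes L :: "'a::euclidean_space set"
  assumes "R > 0" "\<epsilon> > 0"
  shows "\<exists>U. openin local_topology U \<and> L \<in> U \<and> U \<subseteq> {L'. loc_close R \<epsilon> L L'}"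
proof -
  define U where "U = {L'. \<exists>r>0. r < \<epsilon> \<and> loc_close (R + r) (\<epsilon> - r) L L'}"
  have "L \<in> U" unfolding U_def loc_close_iff using assms
    by (intro CollectI exI[of _ "\<epsilon>/2"] conjI exI[of _ 0]) auto
  moreover have "U \<subseteq> {L'. loc_close R \<epsilon> L L'}"
    unfolding U_def by (auto elim: loc_close_mono)
  moreover have "loc_open U"
    unfolding loc_open_def
  proof
    fix L' assume "L' \<in> U"
    then obtain r t where r: "r > 0" "r < \<epsilon>" "norm t < \<epsilon> - r"
      "\<forall>x. norm x < R + r \<longrightarrow> (x - t \<in> L \<longleftrightarrow> x \<in> L')"
      unfolding U_def loc_close_iff by blast
    have "{L''. loc_close (R + r) (r/2) L' L''} \<subseteq> U"
    proof
      fix L'' assume "L'' \<in> {L''. loc_close (R + r) (r/2) L' L''}"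
      then obtain t' where t': "norm t' < r/2" "\<forall>x. norm x < R + r \<longrightarrow> (x - t' \<in> L' \<longleftrightarrow> x \<in> L'')"
        unfolding loc_close_iff by blast
      have "\<forall>x. norm x < R + r/2 \<longrightarrow> (x - (t + t') \<in> L \<longleftrightarrow> x \<in> L'')"
      proof (intro allI impI)
        fix x :: 'a assume x: "norm x < R + r/2"
        have "norm (x - t') \<le> norm x + norm t'" by (rule norm_triangle_ineq4)
        then have "norm (x - t') < R + r" using x t'(1) by simp
        then have "x - t' - t \<in> L \<longleftrightarrow> x - t' \<in> L'" using r(4) by blast
        moreover have "x - t' \<in> L' \<longleftrightarrow> x \<in> L''" using t'(2) x r(1) by simp
        ultimately show "x - (t + t') \<in> L \<longleftrightarrow> x \<in> L''" by (simp add: algebra_simps)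
      qed
      moreover have "norm (t + t') < \<epsilon> - r/2"
        using norm_triangle_ineq[of t t'] r(3) t'(1) by simp
      ultimately show "L'' \<in> U" unfolding U_def loc_close_iff using r
        by (intro CollectI exI[of _ "r/2"] conjI exI[of _ "t + t'"]) (auto simp: algebra_simps)
    qed
    moreover have "R + r > 0" using assms r by simp
    ultimately show "\<exists>R>0. \<exists>\<epsilon>>0. {L'a. loc_close R \<epsilon> L' L'a} \<subseteq> U" using r(1)
      by (intro exI[of _ "R + r"] conjI exI[of _ "r/2"]) auto
  qed
  ultimately show ?thesis unfolding openin_local by blast
qed



lemma open_shift_h: "open P \<Longrightarrow> open {u. u + a \<in> (P::'h::topological_ab_group_add set)}"
  by (rule tgrp_open_trans'[OF tgrp_class])

lemma small_h: "open (P::'h::topological_ab_group_add set) \<Longrightarrow> 0 \<in> P \<Longrightarrow>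
   \<exists>V. open V \<and> 0 \<in> V \<and> (\<forall>x\<in>V. \<forall>y\<in>V. x - y \<in> P \<and> x + y \<in> P)"
  by (rule tgrp_small[OF tgrp_class])

lemma compact_nbhd:
  fixes K :: "'h::t2_space set"
  assumes lc: "locally_compact_space (euclidean :: 'h topology)" and K: "compact K"
  shows "\<exists>G C. open G \<and> compact C \<and> K \<subseteq> G \<and> G \<subseteq> C"
proof -
  have "\<forall>x. \<exists>UV::'h set \<times> 'h set. open (fst UV) \<and> compact (snd UV) \<and> x \<in> fst UV \<and> fst UV \<subseteq> snd UV"
  proof
    fix x :: 'h
    have "\<exists>U. open U \<and> (\<exists>V. compact V \<and> x \<in> U \<and> U \<subseteq> V)"
      using lc unfolding locally_compact_space_def by auto
    then obtain U V where "open U" "compact V" "x \<in> U" "U \<subseteq> V" by blast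
    then show "\<exists>UV::'h set \<times> 'h set. open (fst UV) \<and> compact (snd UV) \<and> x \<in> fst UV \<and> fst UV \<subseteq> snd UV"
      by (intro exI[of _ "(U,V)"]) auto
  qed
  then obtain f :: "'h \<Rightarrow> 'h set \<times> 'h set" where f: "\<forall>x. open (fst (f x)) \<and> compact (snd (f x)) \<and> x \<in> fst (f x) \<and> fst (f x) \<subseteq> snd (f x)"
    by (rule choice[THEN exE]) blast
  have c: "K \<subseteq> \<Union>((\<lambda>x. fst (f x)) ` K)" using f by blast
  have o: "\<And>B. B \<in> (\<lambda>x. fst (f x)) ` K \<Longrightarrow> open B" using f by blast
  obtain T where T: "T \<subseteq> (\<lambda>x. fst (f x)) ` K" "finite T" "K \<subseteq> \<Union>T"
    by (rule compactE[OF K c o])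
  obtain J where J: "J \<subseteq> K" "finite J" "T = (\<lambda>x. fst (f x)) ` J" using finite_subset_image[OF T(2) T(1)] by blast
  show ?thesis
  proof (intro exI conjI)
    show "open (\<Union>x\<in>J. fst (f x))" using f by blast
    show "compact (\<Union>x\<in>J. snd (f x))" using f J(2) by blast
    show "K \<subseteq> (\<Union>x\<in>J. fst (f x))" using T(3) J(3) by blast
    show "(\<Union>x\<in>J. fst (f x)) \<subseteq> (\<Union>x\<in>J. snd (f x))" using f by blast
  qed
qed

lemma compact_add_nbhd:
  fixes K :: "'h::topological_ab_group_add set"
  assumes K: "compact K" and G: "open G" "K \<subseteq> G"
  shows "\<exists>U. open U \<and> 0 \<in> U \<and> (\<forall>k\<in>K. \<forall>u\<in>U. k + u \<in> G)"
proof -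
  have "\<forall>k. \<exists>Q. k \<in> K \<longrightarrow> open Q \<and> 0 \<in> Q \<and> (\<forall>x\<in>Q. \<forall>y\<in>Q. x + y + k \<in> G)"
  proof
    fix k show "\<exists>Q. k \<in> K \<longrightarrow> open Q \<and> 0 \<in> Q \<and> (\<forall>x\<in>Q. \<forall>y\<in>Q. x + y + k \<in> G)"
    proof (cases "k \<in> K")
      case True
      have "open {u. u + k \<in> G}" using G(1) by (rule open_shift_h)
      moreover have "0 \<in> {u. u + k \<in> G}" using G True by auto
      ultimately have "\<exists>V. open V \<and> 0 \<in> V \<and> (\<forall>x\<in>V. \<forall>y\<in>V. x - y \<in> {u. u + k \<in> G} \<and> x + y \<in> {u. u + k \<in> G})"
        by (rule small_h)
      then show ?thesis by auto
    qed auto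
  qed
  then obtain Q :: "'h \<Rightarrow> 'h set" where Q0: "\<forall>k. k \<in> K \<longrightarrow> open (Q k) \<and> 0 \<in> Q k \<and> (\<forall>x\<in>Q k. \<forall>y\<in>Q k. x + y + k \<in> G)"
    by (rule choice[THEN exE]) blast
  have Q: "\<And>k. k \<in> K \<Longrightarrow> open (Q k) \<and> 0 \<in> Q k \<and> (\<forall>x\<in>Q k. \<forall>y\<in>Q k. x + y + k \<in> G)"
    using Q0 by blast
  have c: "K \<subseteq> \<Union>((\<lambda>k. {u. u - k \<in> Q k}) ` K)" using Q by fastforce
  have o: "\<And>B. B \<in> (\<lambda>k. {u. u - k \<in> Q k}) ` K \<Longrightarrow> open B"
  proof -
    fix B assume "B \<in> (\<lambda>k. {u. u - k \<in> Q k}) ` K"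
    then obtain k where "k \<in> K" "B = {u. u - k \<in> Q k}" by blast
    then show "open B" unfolding diff_conv_add_uminus using Q open_shift_h by blast
  qed
  obtain T where T: "T \<subseteq> (\<lambda>k. {u. u - k \<in> Q k}) ` K" "finite T" "K \<subseteq> \<Union>T"
    by (rule compactE[OF K c o])
  obtain J where J: "J \<subseteq> K" "finite J" "T = (\<lambda>k. {u. u - k \<in> Q k}) ` J" using finite_subset_image[OF T(2) T(1)] by blast
  show ?thesis
  proof (intro exI[of _ "\<Inter>j\<in>J. Q j"] conjI ballI)
    show "open (\<Inter>j\<in>J. Q j)" using J Q by blast
    show "0 \<in> (\<Inter>j\<in>J. Q j)" using J Q by blast
    fix k u assume k: "k \<in> K" and u: "u \<in> (\<Inter>j\<in>J. Q j)"
    then obtain j where j: "j \<in> J" "k - j \<in> Q j" using T(3) J(3) by blast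
    then have "(k - j) + u + j \<in> G" using Q J(1) u by blast
    then show "k + u \<in> G" by (simp add: algebra_simps)
  qed
qed



lemma ms_mem: "y \<in> model_set \<Gamma> K x \<longleftrightarrow> (\<exists>g\<in>\<Gamma>. y = fst g + fst x \<and> snd g + snd x \<in> K)"
proof
  assume "y \<in> model_set \<Gamma> K x"
  then obtain g where "g \<in> \<Gamma>" "snd (g + x) \<in> K" "y = fst (g + x)" unfolding model_set_def by blast
  then show "\<exists>g\<in>\<Gamma>. y = fst g + fst x \<and> snd g + snd x \<in> K" by (intro bexI[of _ g]) auto
next
  assume "\<exists>g\<in>\<Gamma>. y = fst g + fst x \<and> snd g + snd x \<in> K"
  then obtain g where "g \<in> \<Gamma>" "snd g + snd x \<in> K" "y = fst g + fst x" by blast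
  then show "y \<in> model_set \<Gamma> K x" unfolding model_set_def by force
qed

lemma ms_act: "set_act v (model_set \<Gamma> K x) = model_set \<Gamma> K (x + (v, 0))"
proof (rule set_eqI)
  fix y show "y \<in> set_act v (model_set \<Gamma> K x) \<longleftrightarrow> y \<in> model_set \<Gamma> K (x + (v, 0))"
    unfolding set_act_mem ms_mem by (auto simp: algebra_simps)
qed

context lat begin

lemma ms_shift: "g \<in> \<Gamma> \<Longrightarrow> model_set \<Gamma> K (x + g) = model_set \<Gamma> K x"
proof (rule set_eqI)
  fix y assume g: "g \<in> \<Gamma>"
  show "y \<in> model_set \<Gamma> K (x + g) \<longleftrightarrow> y \<in> model_set \<Gamma> K x"
    unfolding ms_mem
  proof
    assume "\<exists>h\<in>\<Gamma>. y = fst h + fst (x + g) \<and> snd h + snd (x + g) \<in> K"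
    then obtain h where h: "h \<in> \<Gamma>" "y = fst h + fst (x + g)" "snd h + snd (x + g) \<in> K" by blast
    have "h + g \<in> \<Gamma>" using h g Gadd by blast
    then show "\<exists>h\<in>\<Gamma>. y = fst h + fst x \<and> snd h + snd x \<in> K" using h
      by (intro bexI[of _ "h + g"]) (auto simp: algebra_simps)
  next
    assume "\<exists>h\<in>\<Gamma>. y = fst h + fst x \<and> snd h + snd x \<in> K"
    then obtain h where h: "h \<in> \<Gamma>" "y = fst h + fst x" "snd h + snd x \<in> K" by blast
    have "h - g \<in> \<Gamma>" using h g Gdiff by blast
    then show "\<exists>h\<in>\<Gamma>. y = fst h + fst (x + g) \<and> snd h + snd (x + g) \<in> K" using h
      by (intro bexI[of _ "h - g"]) (auto simp: algebra_simps)
  qed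
qed

lemma finite_Gamma_compact:
  assumes C: "compact C"
  shows "finite (\<Gamma> \<inter> C)"
proof -
  obtain U where U0: "\<forall>g. g \<in> \<Gamma> \<longrightarrow> open (U g) \<and> U g \<inter> \<Gamma> = {g}"
    using Gdisc by (metis)
  have c: "C \<subseteq> \<Union>(insert (- \<Gamma>) (U ` \<Gamma>))" using U0 by blast
  have o: "\<And>B. B \<in> insert (- \<Gamma>) (U ` \<Gamma>) \<Longrightarrow> open B" using U0 Gclosed by auto
  obtain T where T: "T \<subseteq> insert (- \<Gamma>) (U ` \<Gamma>)" "finite T" "C \<subseteq> \<Union>T"
    by (rule compactE[OF C c o])
  have "T - {-\<Gamma>} \<subseteq> U ` \<Gamma>" using T(1) by blast
  then obtain J where J: "J \<subseteq> \<Gamma>" "finite J" "T - {-\<Gamma>} = U ` J"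
    using finite_subset_image[of "T - {-\<Gamma>}"] T(2) by (metis finite_Diff)
  have "\<Gamma> \<inter> C \<subseteq> J"
  proof
    fix g assume g: "g \<in> \<Gamma> \<inter> C"
    then obtain B where B: "B \<in> T" "g \<in> B" using T(3) by blast
    then have "B \<in> T - {-\<Gamma>}" using g by auto
    then obtain j where j: "j \<in> J" "B = U j" using J(3) by blast
    then have "g \<in> U j \<inter> \<Gamma>" using B g by blast
    moreover have jG: "j \<in> \<Gamma>" using J(1) j(1) by blast
    have "U j \<inter> \<Gamma> = {j}" using mp[OF spec[OF U0, of j] jG] by (rule conjunct2)
    ultimately show "g \<in> J" using j(1) by simp
  qed
  then show ?thesis using J(2) finite_subset by blast
qed

end

locale qc = lat \<Gamma> for \<Gamma> :: "('v::euclidean_space \<times> 'h::{topological_ab_group_add,t2_space}) set" +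
  fixes K :: "'h set" and \<mu> :: "'v set \<Rightarrow> ('v \<times> 'h) set"
  assumes H_lc: "locally_compact_space (euclidean :: 'h topology)"
    and \<Gamma>_cocompact: "compact_space (torus_topology \<Gamma>)"
    and perp_dense: "closure (snd ` \<Gamma>) = UNIV"
    and K_compact: "compact K"
    and zero_NS: "0 \<notin> singular_set \<Gamma> K"
    and \<mu>_cont: "continuous_map (subtopology local_topology (dhull (model_set \<Gamma> K 0))) (torus_topology \<Gamma>) \<mu>"
    and \<mu>_ext: "\<And>x. x \<notin> singular_set \<Gamma> K \<Longrightarrow> model_set \<Gamma> K x \<in> dhull (model_set \<Gamma> K 0)
                  \<Longrightarrow> \<mu> (model_set \<Gamma> K x) = coset \<Gamma> x"
    and \<mu>_surj: "\<mu> ` dhull (model_set \<Gamma> K 0) = topspace (torus_topology \<Gamma>)"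
    and \<mu>_equiv: "\<And>v L. L \<in> dhull (model_set \<Gamma> K 0) \<Longrightarrow> \<mu> (set_act v L) = torus_act v (\<mu> L)"
    and \<mu>_inj: "\<And>x. (\<forall>L\<in>dhull (model_set \<Gamma> K 0). \<forall>L'\<in>dhull (model_set \<Gamma> K 0).
                     \<mu> L = coset \<Gamma> x \<and> \<mu> L' = coset \<Gamma> x \<longrightarrow> L = L') \<longleftrightarrow> x \<notin> singular_set \<Gamma> K"
begin

abbreviation "M \<equiv> model_set \<Gamma> K 0"
abbreviation "X \<equiv> subtopology local_topology (dhull M)"

lemma topspace_X: "topspace X = dhull M"
  by (simp add: topspace_local)

lemma M_in: "M \<in> dhull M" by (rule dhull_self)

lemma mu_M: "\<mu> M = coset \<Gamma> 0"
  using \<mu>_ext[OF zero_NS M_in] .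

lemma K_closed: "closed K" using K_compact by (rule compact_imp_closed)

lemma nonfrontier: "g \<in> \<Gamma> \<Longrightarrow> snd g \<notin> frontier K"
proof
  assume g: "g \<in> \<Gamma>" "snd g \<in> frontier K"
  have "- g \<in> \<Gamma>" using g Gneg by blast
  moreover have "snd (0::'v\<times>'h) = snd g + snd (- g)" by simp
  ultimately have "0 \<in> singular_set \<Gamma> K" unfolding singular_set_def using g(2) by blast
  then show False using zero_NS by simp
qed

lemma KL:
  "\<exists>Oh. open Oh \<and> 0 \<in> Oh \<and> (\<forall>g\<in>\<Gamma>. norm (fst g) \<le> R \<longrightarrow> (\<forall>h\<in>Oh. snd g + h \<in> K \<longleftrightarrow> snd g \<in> K))"
proof -
  obtain G C where GC: "open G" "compact C" "K \<subseteq> G" "G \<subseteq> C"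
    using compact_nbhd[OF H_lc K_compact] by blast
  obtain U where U: "open U" "0 \<in> U" "\<forall>k\<in>K. \<forall>u\<in>U. k + u \<in> G"
    using compact_add_nbhd[OF K_compact GC(1) GC(3)] by blast
  obtain U3 where U3: "open U3" "0 \<in> U3" "\<forall>x\<in>U3. \<forall>y\<in>U3. x - y \<in> U \<and> x + y \<in> U"
    using small_h[OF U(1) U(2)] by blast
  define F where "F = \<Gamma> \<inter> (cball 0 R \<times> C)"
  have Ff: "finite F" unfolding F_def by (intro finite_Gamma_compact compact_Times compact_cball GC(2))
  have "\<forall>g. \<exists>P. g \<in> F \<longrightarrow> open P \<and> 0 \<in> P \<and> (\<forall>h\<in>P. snd g + h \<in> K \<longleftrightarrow> snd g \<in> K)"
  proof
    fix g show "\<exists>P. g \<in> F \<longrightarrow> open P \<and> 0 \<in> P \<and> (\<forall>h\<in>P. snd g + h \<in> K \<longleftrightarrow> snd g \<in> K)"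
    proof (cases "g \<in> F")
      case True
      then have gG: "g \<in> \<Gamma>" unfolding F_def by blast
      show ?thesis
      proof (cases "snd g \<in> K")
        case True
        then have "snd g \<in> interior K" using nonfrontier[OF gG] K_closed unfolding frontier_def by auto
        moreover have "open {u. u + snd g \<in> interior K}" by (intro open_shift_h) auto
        ultimately show ?thesis using interior_subset[of K] True
          by (intro exI[of _ "{u. u + snd g \<in> interior K}"]) (auto simp: add.commute)
      next
        case False
        have "open {u. u + snd g \<in> - K}" using K_closed by (intro open_shift_h) auto
        then show ?thesis using False
          by (intro exI[of _ "{u. u + snd g \<in> - K}"]) (auto simp: add.commute)
      qed
    qed auto
  qed
  then obtain P :: "'v \<times> 'h \<Rightarrow> 'h set" where P0: "\<forall>g. g \<in> F \<longrightarrow> open (P g) \<and> 0 \<in> P g \<and> (\<forall>h\<in>P g. snd g + h \<in> K \<longleftrightarrow> snd g \<in> K)"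
    by (rule choice[THEN exE]) blast
  show ?thesis
  proof (intro exI[of _ "U3 \<inter> (\<Inter>g\<in>F. P g)"] conjI ballI impI)
    show "open (U3 \<inter> (\<Inter>g\<in>F. P g))" using U3(1) Ff P0 by blast
    show "0 \<in> U3 \<inter> (\<Inter>g\<in>F. P g)" using U3(2) P0 by blast
    fix g h assume g: "g \<in> \<Gamma>" "norm (fst g) \<le> R" and h: "h \<in> U3 \<inter> (\<Inter>g\<in>F. P g)"
    show "snd g + h \<in> K \<longleftrightarrow> snd g \<in> K"
    proof (cases "g \<in> F")
      case True then show ?thesis using P0 h by blast
    next
      case False
      then have nC: "snd g \<notin> C" using g unfolding F_def by (cases g) auto
      then have "snd g \<notin> K" using GC by blast
      moreover have "snd g + h \<notin> K"
      proof
        assume k: "snd g + h \<in> K"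
        have "0 - h \<in> U" using U3 h by blast
        then have "(snd g + h) + (0 - h) \<in> G" using U(3) k by blast
        then show False using nC GC(4) by auto
      qed
      ultimately show ?thesis by blast
    qed
  qed
qed

end


context qc begin

lemma trans_M: "(\<lambda>p. p - u) ` M = model_set \<Gamma> K (0 + (-u, 0))"
proof -
  have "(\<lambda>p. p - u) ` M = set_act (-u) M" unfolding set_act_def by simp
  also have "\<dots> = model_set \<Gamma> K (0 + (-u,0))" by (rule ms_act)
  finally show ?thesis .
qed

lemma mu_trans_M: "\<mu> ((\<lambda>p. p - u) ` M) = coset \<Gamma> (-u, 0)"
proof -
  have "(\<lambda>p. p - u) ` M = set_act (-u) M" unfolding set_act_def by simp
  then show ?thesis using \<mu>_equiv[OF M_in, of "-u"] mu_M torus_act_coset by simp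
qed

lemma CL:
  assumes R: "R > 0" and e: "\<epsilon> > 0"
  shows "\<exists>Q. open Q \<and> 0 \<in> Q \<and> (\<forall>L\<in>dhull M. \<forall>z\<in>Q. \<mu> L = coset \<Gamma> z \<longrightarrow> loc_close R \<epsilon> M L)"
proof -
  obtain Oh where Oh: "open Oh" "0 \<in> Oh" "\<forall>g\<in>\<Gamma>. norm (fst g) \<le> R + 2 \<longrightarrow> (\<forall>h\<in>Oh. snd g + h \<in> K \<longleftrightarrow> snd g \<in> K)"
    using KL by blast
  define \<delta> where "\<delta> = min (\<epsilon>/2) 1"
  have d: "\<delta> > 0" "\<delta> \<le> \<epsilon>/2" "\<delta> \<le> 1" using e unfolding \<delta>_def by auto
  define O1 where "O1 = ball (0::'v) \<delta> \<times> Oh"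
  have "open O1" "0 \<in> O1" unfolding O1_def using Oh d by (auto simp: open_Times zero_prod_def)
  then have "\<exists>V. open V \<and> 0 \<in> V \<and> (\<forall>x\<in>V. \<forall>y\<in>V. x - y \<in> O1 \<and> x + y \<in> O1)" by (rule small)
  then obtain Q where Q0: "open Q \<and> 0 \<in> Q \<and> (\<forall>x\<in>Q. \<forall>y\<in>Q. x - y \<in> O1 \<and> x + y \<in> O1)" ..
  have "\<forall>L\<in>dhull M. \<forall>z\<in>Q. \<mu> L = coset \<Gamma> z \<longrightarrow> loc_close R \<epsilon> M L"
  proof (intro ballI impI)
    fix L z assume L: "L \<in> dhull M" and z: "z \<in> Q" and muL: "\<mu> L = coset \<Gamma> z"
    obtain U1 where U1: "openin local_topology U1" "L \<in> U1" "U1 \<subseteq> {L'. loc_close (R + 1) \<delta> L L'}"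
      using open_cyl[of "R+1" \<delta> L] R d by auto
    define T where "T = coset \<Gamma> ` {w. w - z \<in> Q}"
    have "openin (torus_topology \<Gamma>) T" unfolding T_def using Q0 by (intro openin_coset_image open_shift') blast
    then have "openin X {x \<in> topspace X. \<mu> x \<in> T}" using \<mu>_cont by (rule openin_continuous_map_preimage[rotated])
    then obtain S where S: "openin local_topology S" "{x \<in> topspace X. \<mu> x \<in> T} = S \<inter> dhull M"
      unfolding openin_subtopology by blast
    have "\<mu> L \<in> T" unfolding T_def muL using Q0 by auto
    then have "L \<in> S" using S(2) L topspace_X by blast
    have "openin local_topology (S \<inter> U1)" using S(1) U1(1) by blast
    moreover have "L \<in> S \<inter> U1" using \<open>L \<in> S\<close> U1(2) by blast
    ultimately obtain u where u: "(\<lambda>p. p - u) ` M \<in> S \<inter> U1"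
      using L unfolding dhull_def in_closure_of by blast
    have "(\<lambda>p. p - u) ` M \<in> dhull M"
      using dhull_act[OF M_in, of "-u"] unfolding set_act_def by simp
    then have "\<mu> ((\<lambda>p. p - u) ` M) \<in> T" using S(2) u topspace_X by blast
    then obtain w where w: "w - z \<in> Q" "coset \<Gamma> (-u, 0) = coset \<Gamma> w" unfolding T_def mu_trans_M by blast
    have wG: "(-u, 0) - w \<in> \<Gamma>" using w(2) coset_eq by blast
    have "(w - z) + z \<in> O1" using Q0 w(1) z by blast
    then have wO1: "norm (fst w) < \<delta>" "snd w \<in> Oh" unfolding O1_def by auto
    have Mu: "(\<lambda>p. p - u) ` M = model_set \<Gamma> K w"
    proof -
      have "(\<lambda>p. p - u) ` M = model_set \<Gamma> K (w + ((-u, 0) - w))" unfolding trans_M by simp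
      also have "\<dots> = model_set \<Gamma> K w" using ms_shift[OF wG] .
      finally show ?thesis .
    qed
    obtain t where t: "norm t < \<delta>" "\<forall>y. norm y < R + 1 \<longrightarrow> (y - t \<in> L \<longleftrightarrow> y \<in> model_set \<Gamma> K w)"
      using U1(3) u unfolding loc_close_iff Mu by blast
    have "\<forall>x. norm x < R \<longrightarrow> (x - (fst w - t) \<in> M \<longleftrightarrow> x \<in> L)"
    proof (intro allI impI)
      fix x :: 'v assume x: "norm x < R"
      have n1: "norm (x + t) < R + 1" using norm_triangle_ineq[of x t] x t(1) d by simp
      then have "x \<in> L \<longleftrightarrow> x + t \<in> model_set \<Gamma> K w" using t(2) by force
      also have "\<dots> \<longleftrightarrow> (\<exists>g\<in>\<Gamma>. x + t = fst g + fst w \<and> snd g + snd w \<in> K)" by (rule ms_mem)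
      also have "\<dots> \<longleftrightarrow> (\<exists>g\<in>\<Gamma>. x + t = fst g + fst w \<and> snd g \<in> K)"
      proof (intro bex_cong refl conj_cong)
        fix g assume g: "g \<in> \<Gamma>" and eq: "x + t = fst g + fst w"
        have "fst g = (x + t) - fst w" using eq by simp
        then have "norm (fst g) \<le> norm (x + t) + norm (fst w)" using norm_triangle_ineq4 by metis
        then have "norm (fst g) \<le> R + 2" using n1 wO1 d by simp
        then show "snd g + snd w \<in> K \<longleftrightarrow> snd g \<in> K" using Oh(3) g wO1(2) by blast
      qed
      also have "\<dots> \<longleftrightarrow> (\<exists>g\<in>\<Gamma>. x - (fst w - t) = fst g + fst (0::'v\<times>'h) \<and> snd g + snd (0::'v\<times>'h) \<in> K)"
        by (intro bex_cong refl conj_cong) (auto simp: algebra_simps)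
      also have "\<dots> \<longleftrightarrow> x - (fst w - t) \<in> M" by (rule ms_mem[symmetric])
      finally show "x - (fst w - t) \<in> M \<longleftrightarrow> x \<in> L" by simp
    qed
    moreover have "norm (fst w - t) < \<epsilon>"
      using norm_triangle_ineq4[of "fst w" t] wO1(1) t(1) d by simp
    ultimately show "loc_close R \<epsilon> M L" unfolding loc_close_iff by blast
  qed
  then show ?thesis using Q0 by blast
qed

end


lemma prox_factor:
  assumes f: "factor_map X actX Y actY f" and p: "proximal X actX a b"
    and ab: "a \<in> topspace X" "b \<in> topspace X"
  shows "proximal Y actY (f a) (f b)"
  unfolding proximal_def
proof (intro allI impI, elim conjE)
  fix W assume W: "openin (prod_topology Y Y) W" and d: "\<forall>z\<in>topspace Y. (z, z) \<in> W"
  have cf: "continuous_map X Y f" using f unfolding factor_map_def by blast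
  define W' where "W' = {(p, q). p \<in> topspace X \<and> q \<in> topspace X \<and> (f p, f q) \<in> W}"
  have "openin (prod_topology X X) W'"
    unfolding openin_prod_topology_alt
  proof (intro allI impI)
    fix p q assume "(p, q) \<in> W'"
    then have pq: "p \<in> topspace X" "q \<in> topspace X" "(f p, f q) \<in> W" unfolding W'_def by auto
    then obtain A B where AB: "openin Y A" "openin Y B" "f p \<in> A" "f q \<in> B" "A \<times> B \<subseteq> W"
      using W unfolding openin_prod_topology_alt by meson
    have "openin X {x \<in> topspace X. f x \<in> A}" "openin X {x \<in> topspace X. f x \<in> B}"
      using cf AB by (auto intro: openin_continuous_map_preimage)
    moreover have "{x \<in> topspace X. f x \<in> A} \<times> {x \<in> topspace X. f x \<in> B} \<subseteq> W'"
      using AB(5) unfolding W'_def by auto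
    ultimately show "\<exists>U V. openin X U \<and> openin X V \<and> p \<in> U \<and> q \<in> V \<and> U \<times> V \<subseteq> W'"
      using pq AB by blast
  qed
  moreover have "\<forall>z\<in>topspace X. (z, z) \<in> W'"
    unfolding W'_def using d cf by (auto simp: continuous_map_def)
  ultimately obtain v where "(actX v a, actX v b) \<in> W'" using p unfolding proximal_def by blast
  then have "(f (actX v a), f (actX v b)) \<in> W" unfolding W'_def by auto
  moreover have "f (actX v a) = actY v (f a)" "f (actX v b) = actY v (f b)"
    using f ab unfolding factor_map_def by auto
  ultimately show "\<exists>v. (actY v (f a), actY v (f b)) \<in> W" by auto
qed

lemma prox_equi_eq:
  assumes ds: "dyn_sys Y act" and eq: "equicontinuous Y act" and p: "proximal Y act a b"
    and ab: "a \<in> topspace Y" "b \<in> topspace Y"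
  shows "a = b"
proof (rule ccontr)
  assume ne: "a \<noteq> b"
  have H: "Hausdorff_space Y" using ds unfolding dyn_sys_def by blast
  define W where "W = topspace Y \<times> topspace Y - {(a, b)}"
  have w1: "openin (prod_topology Y Y) W"
    unfolding openin_prod_topology_alt
  proof (intro allI impI)
    fix x y assume "(x, y) \<in> W"
    then have xy: "x \<in> topspace Y" "y \<in> topspace Y" "x \<noteq> a \<or> y \<noteq> b" unfolding W_def by auto
    show "\<exists>U V. openin Y U \<and> openin Y V \<and> x \<in> U \<and> y \<in> V \<and> U \<times> V \<subseteq> W"
    proof (cases "x \<noteq> a")
      case True
      then obtain U V where "openin Y U" "openin Y V" "x \<in> U" "a \<in> V" "disjnt U V"
        using H xy ab unfolding Hausdorff_space_def by blast
      then show ?thesis using xy unfolding W_def disjnt_def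
        by (intro exI[of _ U] exI[of _ "topspace Y"]) (auto dest: openin_subset)
    next
      case False
      then have "y \<noteq> b" using xy by blast
      then obtain U V where "openin Y U" "openin Y V" "y \<in> U" "b \<in> V" "disjnt U V"
        using H xy ab unfolding Hausdorff_space_def by blast
      then show ?thesis using xy unfolding W_def disjnt_def
        by (intro exI[of _ "topspace Y"] exI[of _ U]) (auto dest: openin_subset)
    qed
  qed
  have w2: "\<forall>x\<in>topspace Y. (x, x) \<in> W" unfolding W_def using ne by blast
  have "\<exists>V. openin (prod_topology Y Y) V \<and> (\<forall>x\<in>topspace Y. (x, x) \<in> V) \<and>
    (\<forall>v. \<forall>(x, y)\<in>V. (act v x, act v y) \<in> W)"
    using eq[unfolded equicontinuous_def, rule_format, OF conjI[OF w1 w2]] .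
  then obtain V where V0: "openin (prod_topology Y Y) V \<and> (\<forall>x\<in>topspace Y. (x, x) \<in> V) \<and>
    (\<forall>v. \<forall>(x, y)\<in>V. (act v x, act v y) \<in> W)" ..
  note V = conjunct1[OF V0] conjunct1[OF conjunct2[OF V0]] conjunct2[OF conjunct2[OF V0]]
  have "\<exists>v. (act v a, act v b) \<in> V" using p[unfolded proximal_def, rule_format, OF conjI[OF V(1) V(2)]] .
  then obtain v where v: "(act v a, act v b) \<in> V" ..
  then have "(act (-v) (act v a), act (-v) (act v b)) \<in> W" using V(3) by fast
  moreover have "act (-v) (act v a) = a" "act (-v) (act v b) = b"
    using ds ab unfolding dyn_sys_def by (metis add.left_inverse)+
  ultimately show False unfolding W_def by simp
qed



context qc begin

lemma dens: "open Q \<Longrightarrow> 0 \<in> Q \<Longrightarrow> \<exists>v g. g \<in> \<Gamma> \<and> x + (v, 0) + g \<in> Q"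
proof -
  assume Q: "open Q" "0 \<in> Q"
  obtain A B where AB: "open A" "open B" "(0::'v, 0::'h) \<in> A \<times> B" "A \<times> B \<subseteq> Q"
    using open_prod_elim[OF Q(1)] Q(2) by (metis zero_prod_def)
  have "open {h. h + snd x \<in> B}" using AB(2) by (rule open_shift_h)
  moreover have "- snd x \<in> {h. h + snd x \<in> B}" using AB(3) by simp
  moreover have "- snd x \<in> closure (snd ` \<Gamma>)" using perp_dense by simp
  ultimately obtain y where "y \<in> snd ` \<Gamma>" "y + snd x \<in> B" using closure_meet by blast
  then obtain g where g: "g \<in> \<Gamma>" "snd g + snd x \<in> B" by blast
  have "x + (- (fst x + fst g), 0) + g = (0, snd g + snd x)" by (simp add: prod_eq_iff algebra_simps)
  moreover have "(0, snd g + snd x) \<in> Q" using AB g by auto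
  ultimately show ?thesis using g by metis
qed

lemma NM:
  assumes R: "R > 0" and e: "\<epsilon> > 0"
  shows "\<exists>Q'. open Q' \<and> 0 \<in> Q' \<and> (\<forall>x. \<exists>v. \<forall>L\<in>dhull M. \<forall>y. \<mu> L = coset \<Gamma> y \<and> y - x \<in> Q'
            \<longrightarrow> loc_close R \<epsilon> M (set_act v L))"
proof -
  obtain Q where Q: "open Q" "0 \<in> Q" "\<forall>L\<in>dhull M. \<forall>z\<in>Q. \<mu> L = coset \<Gamma> z \<longrightarrow> loc_close R \<epsilon> M L"
    using CL[OF R e] by blast
  have "\<exists>V. open V \<and> 0 \<in> V \<and> (\<forall>a\<in>V. \<forall>b\<in>V. a - b \<in> Q \<and> a + b \<in> Q)" using small[OF Q(1) Q(2)] .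
  then obtain Q' where Q'0: "open Q' \<and> 0 \<in> Q' \<and> (\<forall>a\<in>Q'. \<forall>b\<in>Q'. a - b \<in> Q \<and> a + b \<in> Q)" ..
  have "\<exists>v. \<forall>L\<in>dhull M. \<forall>y. \<mu> L = coset \<Gamma> y \<and> y - x \<in> Q' \<longrightarrow> loc_close R \<epsilon> M (set_act v L)" for x
  proof -
    obtain v g where vg: "g \<in> \<Gamma>" "x + (v, 0) + g \<in> Q'" using dens Q'0 by blast
    show ?thesis
    proof (intro exI[of _ v] ballI allI impI, elim conjE)
      fix L y assume L: "L \<in> dhull M" and y: "\<mu> L = coset \<Gamma> y" "y - x \<in> Q'"
      have "\<mu> (set_act v L) = coset \<Gamma> (y + (v, 0))" using \<mu>_equiv[OF L] y(1) torus_act_coset by simp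
      also have "\<dots> = coset \<Gamma> (y + (v, 0) + g)" using coset_eq vg(1) Gneg by simp
      finally have 1: "\<mu> (set_act v L) = coset \<Gamma> (y + (v, 0) + g)" .
      have "(y - x) + (x + (v, 0) + g) \<in> Q" using Q'0 y(2) vg(2) by blast
      then have 2: "y + (v, 0) + g \<in> Q" by (simp add: algebra_simps)
      show "loc_close R \<epsilon> M (set_act v L)" using Q(3) dhull_act[OF L] 1 2 by blast
    qed
  qed
  then show ?thesis using Q'0 by blast
qed

lemma mu_in: "L \<in> dhull M \<Longrightarrow> \<mu> L \<in> range (coset \<Gamma>)"
  using \<mu>_surj topspace_torus by blast

lemma cyl_in_open:
  assumes A: "openin X A" and MA: "M \<in> A"
  shows "\<exists>R>0. \<exists>\<epsilon>>0. \<forall>L\<in>dhull M. loc_close R \<epsilon> M L \<longrightarrow> L \<in> A"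
proof -
  obtain S where S: "openin local_topology S" "A = S \<inter> dhull M" using A unfolding openin_subtopology by blast
  then have "loc_open S" "M \<in> S" using MA openin_local by (metis, blast)
  then obtain R e where "R > 0" "e > 0" "{L'. loc_close R e M L'} \<subseteq> S" unfolding loc_open_def by blast
  then show ?thesis using S(2) by blast
qed

lemma same_mu_prox:
  assumes L: "L \<in> dhull M" "L' \<in> dhull M" and eq: "\<mu> L = \<mu> L'"
  shows "proximal X set_act L L'"
  unfolding proximal_def
proof (intro allI impI, elim conjE)
  fix W assume W: "openin (prod_topology X X) W" and d: "\<forall>z\<in>topspace X. (z, z) \<in> W"
  have "(M, M) \<in> W" using d M_in topspace_X by blast
  then obtain A B where AB: "openin X A" "openin X B" "M \<in> A" "M \<in> B" "A \<times> B \<subseteq> W"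
    using W unfolding openin_prod_topology_alt by meson
  have "openin X (A \<inter> B)" using AB by blast
  then obtain R e where Re: "R > 0" "e > 0" "\<forall>L\<in>dhull M. loc_close R e M L \<longrightarrow> L \<in> A \<inter> B"
    using cyl_in_open AB by blast
  obtain Q' where Q': "open Q'" "0 \<in> Q'" "\<forall>x. \<exists>v. \<forall>L\<in>dhull M. \<forall>y. \<mu> L = coset \<Gamma> y \<and> y - x \<in> Q'
            \<longrightarrow> loc_close R e M (set_act v L)"
    using NM[OF Re(1) Re(2)] by blast
  obtain x where x: "\<mu> L = coset \<Gamma> x" using mu_in[OF L(1)] by blast
  obtain v where v: "\<forall>L\<in>dhull M. \<forall>y. \<mu> L = coset \<Gamma> y \<and> y - x \<in> Q' \<longrightarrow> loc_close R e M (set_act v L)"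
    using Q'(3) by blast
  have "x - x \<in> Q'" using Q'(2) by simp
  then have "loc_close R e M (set_act v L)" "loc_close R e M (set_act v L')"
    using v L x eq by metis+
  then have "set_act v L \<in> A" "set_act v L' \<in> B" using Re(3) dhull_act L by blast+
  then show "\<exists>v. (set_act v L, set_act v L') \<in> W" using AB(5) by blast
qed

lemma mu_factor: "factor_map X set_act (torus_topology \<Gamma>) torus_act \<mu>"
  unfolding factor_map_def using \<mu>_cont \<mu>_surj \<mu>_equiv topspace_X by simp

lemma prox_iff:
  assumes L: "L \<in> dhull M" "L' \<in> dhull M"
  shows "proximal X set_act L L' \<longleftrightarrow> \<mu> L = \<mu> L'"
proof
  assume "proximal X set_act L L'"
  then have "proximal (torus_topology \<Gamma>) torus_act (\<mu> L) (\<mu> L')"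
    using prox_factor[OF mu_factor] L topspace_X by blast
  then show "\<mu> L = \<mu> L'"
    using prox_equi_eq[OF torus_dyn[OF \<Gamma>_cocompact] torus_equicont[OF \<Gamma>_cocompact]] mu_in L topspace_torus
    by blast
next
  assume "\<mu> L = \<mu> L'" then show "proximal X set_act L L'" using same_mu_prox L by blast
qed

end


lemma dyn_inv: "dyn_sys Z act \<Longrightarrow> z \<in> topspace Z \<Longrightarrow> act (-v) (act v z) = z"
  unfolding dyn_sys_def by (metis add.left_inverse)

lemma dyn_top: "dyn_sys Z act \<Longrightarrow> z \<in> topspace Z \<Longrightarrow> act v z \<in> topspace Z"
  unfolding dyn_sys_def by blast

context qc begin

lemma min_rank: "minimal_rank X (torus_topology \<Gamma>) \<mu> = 1"
proof -
  have fib0: "{x \<in> topspace X. \<mu> x = coset \<Gamma> 0} = {M}"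
  proof
    show "{M} \<subseteq> {x \<in> topspace X. \<mu> x = coset \<Gamma> 0}" using M_in mu_M topspace_X by simp
    have inj0: "\<forall>L\<in>dhull M. \<forall>L'\<in>dhull M. \<mu> L = coset \<Gamma> 0 \<and> \<mu> L' = coset \<Gamma> 0 \<longrightarrow> L = L'"
      using \<mu>_inj[of 0] zero_NS by blast
    show "{x \<in> topspace X. \<mu> x = coset \<Gamma> 0} \<subseteq> {M}"
      using inj0 M_in mu_M topspace_X by auto
  qed
  have le: "minimal_rank X (torus_topology \<Gamma>) \<mu> \<le> 1"
  proof -
    have "minimal_rank X (torus_topology \<Gamma>) \<mu> \<le> ecard {x \<in> topspace X. \<mu> x = coset \<Gamma> 0}"
      unfolding minimal_rank_def
      by (rule INF_lower[of "coset \<Gamma> 0" _ "\<lambda>y. ecard {x \<in> topspace X. \<mu> x = y}", OF coset_mem_range])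
    also have "\<dots> = 1" unfolding fib0 ecard_def by (simp add: one_enat_def)
    finally show ?thesis .
  qed
  have ge: "1 \<le> minimal_rank X (torus_topology \<Gamma>) \<mu>"
    unfolding minimal_rank_def
  proof (rule INF_greatest[of "topspace (torus_topology \<Gamma>)" 1 "\<lambda>y. ecard {x \<in> topspace X. \<mu> x = y}"])
    fix c assume "c \<in> topspace (torus_topology \<Gamma>)"
    then have "c \<in> \<mu> ` dhull M" using \<mu>_surj by simp
    then obtain L where L: "L \<in> dhull M" "\<mu> L = c" by blast
    then have ne: "{x \<in> topspace X. \<mu> x = c} \<noteq> {}" using topspace_X by blast
    show "1 \<le> ecard {x \<in> topspace X. \<mu> x = c}"
    proof (cases "finite {x \<in> topspace X. \<mu> x = c}")
      case True
      then have "card {x \<in> topspace X. \<mu> x = c} \<ge> 1" using ne by (simp add: Suc_le_eq card_gt_0_iff)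
      then show ?thesis using True unfolding ecard_def by (simp add: one_enat_def)
    next
      case False then show ?thesis unfolding ecard_def by simp
    qed
  qed
  show ?thesis using le ge by (rule antisym)
qed

lemma maximal: "max_equicont_factor TYPE('z) X set_act (torus_topology \<Gamma>) torus_act \<mu>"
  unfolding max_equicont_factor_def
proof (intro conjI allI impI torus_dyn \<Gamma>_cocompact torus_equicont mu_factor, elim conjE)
  fix Z :: "'z topology" and actZ \<rho>
  assume dZ: "dyn_sys Z actZ" and eZ: "equicontinuous Z actZ" and fZ: "factor_map X set_act Z actZ \<rho>"
  have cr: "continuous_map X Z \<rho>" and imr: "\<rho> ` dhull M = topspace Z"
    and eqr: "\<And>v L. L \<in> dhull M \<Longrightarrow> \<rho> (set_act v L) = actZ v (\<rho> L)"
    using fZ topspace_X unfolding factor_map_def by auto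
  have rtop: "L \<in> dhull M \<Longrightarrow> \<rho> L \<in> topspace Z" for L using imr by blast
  have wd: "\<rho> L = \<rho> L'" if "L \<in> dhull M" "L' \<in> dhull M" "\<mu> L = \<mu> L'" for L L'
  proof -
    have "proximal X set_act L L'" using prox_iff that by blast
    then have "proximal Z actZ (\<rho> L) (\<rho> L')" using prox_factor[OF fZ] that topspace_X by blast
    then show ?thesis using prox_equi_eq[OF dZ eZ] rtop that by blast
  qed
  define f where "f c = \<rho> (SOME L. L \<in> dhull M \<and> \<mu> L = c)" for c
  have fmu: "f (\<mu> L) = \<rho> L" if L: "L \<in> dhull M" for L
  proof -
    have "\<exists>L'. L' \<in> dhull M \<and> \<mu> L' = \<mu> L" using L by blast
    then have "(SOME L'. L' \<in> dhull M \<and> \<mu> L' = \<mu> L) \<in> dhull M \<and> \<mu> (SOME L'. L' \<in> dhull M \<and> \<mu> L' = \<mu> L) = \<mu> L"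
      by (rule someI_ex)
    then show ?thesis unfolding f_def using wd L by blast
  qed
  have tt: "topspace (torus_topology \<Gamma>) = \<mu> ` dhull M" using \<mu>_surj by simp
  have cont: "continuous_map (torus_topology \<Gamma>) Z f"
    unfolding continuous_map_def
  proof (intro conjI allI impI)
    show "f \<in> topspace (torus_topology \<Gamma>) \<rightarrow> topspace Z" unfolding tt using fmu rtop by auto
  next
    fix U assume U: "openin Z U"
    show "openin (torus_topology \<Gamma>) {c \<in> topspace (torus_topology \<Gamma>). f c \<in> U}"
      unfolding openin_subopen[of _ "{c \<in> topspace (torus_topology \<Gamma>). f c \<in> U}"]
    proof (intro ballI)
      fix c0 assume c0: "c0 \<in> {c \<in> topspace (torus_topology \<Gamma>). f c \<in> U}"
      then obtain L0 where L0: "L0 \<in> dhull M" "\<mu> L0 = c0" unfolding tt by blast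
      obtain x0 where x0: "c0 = coset \<Gamma> x0" using mu_in L0 by blast
      have rL0: "\<rho> L0 \<in> U" using c0 fmu L0 by auto
      have reg: "regular_space Z" using dZ unfolding dyn_sys_def
        by (intro compact_Hausdorff_imp_regular_space) auto
      have Csub: "closedin Z (topspace Z - U)" using U by blast
      have "\<rho> L0 \<in> topspace Z - (topspace Z - U)" using rL0 rtop[OF L0(1)] by blast
      then obtain U1 V1 where UV: "openin Z U1" "openin Z V1" "\<rho> L0 \<in> U1" "topspace Z - U \<subseteq> V1" "disjnt U1 V1"
        using reg Csub unfolding regular_space_def by metis
      define W where "W = U \<times> U \<union> V1 \<times> V1"
      have w1: "openin (prod_topology Z Z) W" unfolding W_def using U UV(2)
        by (intro openin_Un) (auto simp: openin_prod_Times_iff)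
      have w2: "\<forall>x\<in>topspace Z. (x, x) \<in> W" unfolding W_def using UV(4) by blast
      have "\<exists>V. openin (prod_topology Z Z) V \<and> (\<forall>x\<in>topspace Z. (x, x) \<in> V) \<and>
        (\<forall>v. \<forall>(x, y)\<in>V. (actZ v x, actZ v y) \<in> W)"
        using eZ[unfolded equicontinuous_def, rule_format, OF conjI[OF w1 w2]] .
      then obtain V where V0: "openin (prod_topology Z Z) V \<and> (\<forall>x\<in>topspace Z. (x, x) \<in> V) \<and>
        (\<forall>v. \<forall>(x, y)\<in>V. (actZ v x, actZ v y) \<in> W)" ..
      have "(\<rho> M, \<rho> M) \<in> V" using V0 rtop[OF M_in] by blast
      then obtain D1 D2 where D: "openin Z D1" "openin Z D2" "\<rho> M \<in> D1" "\<rho> M \<in> D2" "D1 \<times> D2 \<subseteq> V"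
        using V0 unfolding openin_prod_topology_alt by meson
      define A where "A = {L \<in> topspace X. \<rho> L \<in> D1 \<inter> D2}"
      have "openin X A" unfolding A_def using cr D(1,2) by (intro openin_continuous_map_preimage) auto
      moreover have "M \<in> A" unfolding A_def using D M_in topspace_X by blast
      ultimately obtain R e where Re: "R > 0" "e > 0" "\<forall>L\<in>dhull M. loc_close R e M L \<longrightarrow> L \<in> A"
        using cyl_in_open by blast
      obtain Q' where Q': "open Q'" "0 \<in> Q'" "\<forall>x. \<exists>v. \<forall>L\<in>dhull M. \<forall>y. \<mu> L = coset \<Gamma> y \<and> y - x \<in> Q'
            \<longrightarrow> loc_close R e M (set_act v L)"
        using NM[OF Re(1) Re(2)] by blast
      obtain v where v: "\<forall>L\<in>dhull M. \<forall>y. \<mu> L = coset \<Gamma> y \<and> y - x0 \<in> Q' \<longrightarrow> loc_close R e M (set_act v L)"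
        using Q'(3) by blast
      define T where "T = coset \<Gamma> ` {y. y - x0 \<in> Q'}"
      have "openin (torus_topology \<Gamma>) T" unfolding T_def using Q'(1) by (intro openin_coset_image open_shift')
      moreover have "c0 \<in> T" unfolding T_def x0 using Q'(2) by auto
      moreover have "T \<subseteq> {c \<in> topspace (torus_topology \<Gamma>). f c \<in> U}"
      proof
        fix c assume "c \<in> T"
        then obtain y where y: "c = coset \<Gamma> y" "y - x0 \<in> Q'" unfolding T_def by blast
        then have ct: "c \<in> topspace (torus_topology \<Gamma>)" by (simp add: topspace_torus)
        then obtain L where L: "L \<in> dhull M" "\<mu> L = c" unfolding tt by blast
        have "loc_close R e M (set_act v L)" using v L y by blast
        then have "set_act v L \<in> A" using Re(3) dhull_act[OF L(1)] by blast
        then have a1: "actZ v (\<rho> L) \<in> D2" unfolding A_def using eqr[OF L(1)] by auto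
        have "x0 - x0 \<in> Q'" using Q'(2) by simp
        then have "loc_close R e M (set_act v L0)" using v L0 x0 by blast
        then have "set_act v L0 \<in> A" using Re(3) dhull_act[OF L0(1)] by blast
        then have a0: "actZ v (\<rho> L0) \<in> D1" unfolding A_def using eqr[OF L0(1)] by auto
        have "(actZ v (\<rho> L0), actZ v (\<rho> L)) \<in> V" using a0 a1 D(5) by blast
        then have "(actZ (-v) (actZ v (\<rho> L0)), actZ (-v) (actZ v (\<rho> L))) \<in> W" using V0 by fast
        then have "(\<rho> L0, \<rho> L) \<in> W" using dyn_inv[OF dZ] rtop L0(1) L(1) by simp
        then have "\<rho> L \<in> U" unfolding W_def using UV(3,5) unfolding disjnt_def by blast
        then show "c \<in> {c \<in> topspace (torus_topology \<Gamma>). f c \<in> U}" using ct fmu L by auto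
      qed
      ultimately show "\<exists>T. openin (torus_topology \<Gamma>) T \<and> c0 \<in> T \<and> T \<subseteq> {c \<in> topspace (torus_topology \<Gamma>). f c \<in> U}"
        by blast
    qed
  qed
  have img: "f ` topspace (torus_topology \<Gamma>) = topspace Z"
    unfolding tt image_image using fmu imr by (metis (no_types, lifting) image_cong)
  have equiv: "\<forall>v. \<forall>c\<in>topspace (torus_topology \<Gamma>). f (torus_act v c) = actZ v (f c)"
  proof (intro allI ballI)
    fix v c assume "c \<in> topspace (torus_topology \<Gamma>)"
    then obtain L where L: "L \<in> dhull M" "\<mu> L = c" unfolding tt by blast
    have "f (torus_act v c) = f (\<mu> (set_act v L))" using \<mu>_equiv L by simp
    also have "\<dots> = \<rho> (set_act v L)" using fmu dhull_act L by blast
    also have "\<dots> = actZ v (\<rho> L)" using eqr L by blast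
    also have "\<dots> = actZ v (f c)" using fmu[OF L(1)] L(2) by simp
    finally show "f (torus_act v c) = actZ v (f c)" .
  qed
  show "\<exists>f. factor_map (torus_topology \<Gamma>) torus_act Z actZ f \<and> (\<forall>x\<in>topspace X. \<rho> x = f (\<mu> x))"
    using cont img equiv fmu topspace_X unfolding factor_map_def by (intro exI[of _ f]) auto
qed

end

theorem mainTheorem9:
  fixes \<Gamma> :: "('v::euclidean_space \<times> 'h::{topological_ab_group_add, t2_space}) set"
    and K :: "'h set"
    and \<mu> :: "'v set \<Rightarrow> ('v \<times> 'h) set"
  assumes H_lc: "locally_compact_space (euclidean :: 'h topology)"
    and \<Gamma>_subgroup: "0 \<in> \<Gamma>" "\<And>a b. a \<in> \<Gamma> \<Longrightarrow> b \<in> \<Gamma> \<Longrightarrow> a + b \<in> \<Gamma>" "\<And>a. a \<in> \<Gamma> \<Longrightarrow> - a \<in> \<Gamma>"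
    and \<Gamma>_discrete: "\<And>\<gamma>. \<gamma> \<in> \<Gamma> \<Longrightarrow> \<exists>U. open U \<and> U \<inter> \<Gamma> = {\<gamma>}"
    and \<Gamma>_cocompact: "compact_space (torus_topology \<Gamma>)"
    and par_inj: "inj_on fst \<Gamma>" and par_dense: "closure (fst ` \<Gamma>) = UNIV"
    and perp_inj: "inj_on snd \<Gamma>" and perp_dense: "closure (snd ` \<Gamma>) = UNIV"
    and K_compact: "compact K" and K_reg: "closure (interior K) = K"
    and K_stab: "\<And>h. (\<lambda>k. h + k) ` K = K \<Longrightarrow> h = 0"
    and zero_NS: "0 \<notin> singular_set \<Gamma> K"
    and \<mu>_cont: "continuous_map (subtopology local_topology (dhull (model_set \<Gamma> K 0))) (torus_topology \<Gamma>) \<mu>"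
    and \<mu>_ext: "\<And>x. x \<notin> singular_set \<Gamma> K \<Longrightarrow> model_set \<Gamma> K x \<in> dhull (model_set \<Gamma> K 0)
                  \<Longrightarrow> \<mu> (model_set \<Gamma> K x) = coset \<Gamma> x"
    and \<mu>_surj: "\<mu> ` dhull (model_set \<Gamma> K 0) = topspace (torus_topology \<Gamma>)"
    and \<mu>_equiv: "\<And>v L. L \<in> dhull (model_set \<Gamma> K 0) \<Longrightarrow> \<mu> (set_act v L) = torus_act v (\<mu> L)"
    and \<mu>_inj: "\<And>x. (\<forall>L\<in>dhull (model_set \<Gamma> K 0). \<forall>L'\<in>dhull (model_set \<Gamma> K 0).
                     \<mu> L = coset \<Gamma> x \<and> \<mu> L' = coset \<Gamma> x \<longrightarrow> L = L') \<longleftrightarrow> x \<notin> singular_set \<Gamma> K"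
  shows "max_equicont_factor TYPE('z)
           (subtopology local_topology (dhull (model_set \<Gamma> K 0))) set_act
           (torus_topology \<Gamma>) torus_act \<mu>
       \<and> minimal_rank (subtopology local_topology (dhull (model_set \<Gamma> K 0))) (torus_topology \<Gamma>) \<mu> = 1
       \<and> (\<forall>L\<in>dhull (model_set \<Gamma> K 0). \<forall>L'\<in>dhull (model_set \<Gamma> K 0).
            proximal (subtopology local_topology (dhull (model_set \<Gamma> K 0))) set_act L L' \<longleftrightarrow> \<mu> L = \<mu> L')"
  proof -
  interpret q: qc \<Gamma> K \<mu>
    apply unfold_locales
    apply (fact \<Gamma>_subgroup(1))
    apply (fact \<Gamma>_subgroup(2))
    apply (fact \<Gamma>_subgroup(3))
    apply (fact \<Gamma>_discrete)
    apply (fact H_lc)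
    apply (fact \<Gamma>_cocompact)
    apply (fact perp_dense)
    apply (fact K_compact)
    apply (fact zero_NS)
    apply (fact \<mu>_cont)
    apply (fact \<mu>_ext)
    apply (fact \<mu>_surj)
    apply (fact \<mu>_equiv)
    apply (fact \<mu>_inj)
    done
  show ?thesis
    using q.maximal q.min_rank q.prox_iff by blast
qed

end
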